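(* Let $\Gamma$ be a countable discrete group with the Glasner–Monod Property $(F)$. Then $\Gamma$ has Property $(T_{\ell_p})$ for every $1<p<\infty$, $p\neq2$.
   Context: An action of $\Gamma$ on a countable set $X$ is amenable if the associated permutation representation of $\Gamma$ on $\ell_2(X)$ weakly contains the trivial representation (i.e. has almost invariant unit vectors). $\Gamma$ has Property $(F)$ if every amenable action of $\Gamma$ on a countable set has a fixed point. All Banach spaces are complex; $\ell_p=\ell_p(\mathbf N)$, $q$ the conjugate exponent, $\mathbf O(\ell_p)$ the group of linear bijective isometries. An orthogonal representation of $\Gamma$ on $\ell_p$ is a homomorphism $\pi:\Gamma\to\mathbf O(\ell_p)$; a sequence of almost invariant vectors is a sequence of unit vectors $f_n$ with $\|\pi(g)f_n-f_n\|\to0$ for all $g$. With $\pi^*$ the dual representation on $\ell_q$, $\ell'_p(\pi)$ is the annihilator in $\ell_p$ of the $\pi^*(\Gamma)$-invariant vectors of $\ell_q$. $\Gamma$ has Property $(T_{\ell_p})$ if for no orthogonal representation $\pi$ on $\ell_p$ does $\ell'_p(\pi)$ contain a sequence of almost invariant vectors. *)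

theory Defs
  imports "HOL-Analysis.Analysis" "HOL-Algebra.Group_Action"
begin

text \<open>Countable sets are modelled as subsets of nat (every countable set is in bijection
with one). Vectors of l2(X) are functions nat => complex, only their values on X matter.\<close>

definition l2_vec :: "nat set \<Rightarrow> (nat \<Rightarrow> complex) \<Rightarrow> bool" where
  "l2_vec X f \<longleftrightarrow> (\<lambda>x. (cmod (f x))\<^sup>2) summable_on X"

definition l2_norm :: "nat set \<Rightarrow> (nat \<Rightarrow> complex) \<Rightarrow> real" where
  "l2_norm X f = sqrt (infsum (\<lambda>x. (cmod (f x))\<^sup>2) X)"

definition perm_rep :: "('g, 'b) monoid_scheme \<Rightarrow> ('g \<Rightarrow> nat \<Rightarrow> nat) \<Rightarrow> 'g \<Rightarrow> (nat \<Rightarrow> complex) \<Rightarrow> (nat \<Rightarrow> complex)" where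
  "perm_rep G \<phi> g f = (\<lambda>x. f (\<phi> (inv\<^bsub>G\<^esub> g) x))"

definition amenable_action :: "('g, 'b) monoid_scheme \<Rightarrow> nat set \<Rightarrow> ('g \<Rightarrow> nat \<Rightarrow> nat) \<Rightarrow> bool" where
  "amenable_action G X \<phi> \<longleftrightarrow> group_action G X \<phi> \<and>
     (\<forall>F \<epsilon>. finite F \<and> F \<subseteq> carrier G \<and> \<epsilon> > 0 \<longrightarrow>
        (\<exists>f. l2_vec X f \<and> l2_norm X f = 1 \<and>
             (\<forall>g\<in>F. l2_norm X (\<lambda>x. perm_rep G \<phi> g f x - f x) < \<epsilon>)))"

definition property_F :: "('g, 'b) monoid_scheme \<Rightarrow> bool" where
  "property_F G \<longleftrightarrow> (\<forall>(X :: nat set) (\<phi> :: 'g \<Rightarrow> nat \<Rightarrow> nat).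
      amenable_action G X \<phi> \<longrightarrow> (\<exists>x\<in>X. \<forall>g\<in>carrier G. \<phi> g x = x))"

definition lp_space :: "real \<Rightarrow> (nat \<Rightarrow> complex) set" where
  "lp_space p = {f. (\<lambda>n. cmod (f n) powr p) summable_on UNIV}"

definition lp_norm :: "real \<Rightarrow> (nat \<Rightarrow> complex) \<Rightarrow> real" where
  "lp_norm p f = (infsum (\<lambda>n. cmod (f n) powr p) UNIV) powr (1 / p)"

definition conj_exp :: "real \<Rightarrow> real" where
  "conj_exp p = p / (p - 1)"

definition pairing :: "(nat \<Rightarrow> complex) \<Rightarrow> (nat \<Rightarrow> complex) \<Rightarrow> complex" where
  "pairing f \<psi> = infsum (\<lambda>n. f n * \<psi> n) UNIV"

definition lp_isometry :: "real \<Rightarrow> ((nat \<Rightarrow> complex) \<Rightarrow> (nat \<Rightarrow> complex)) \<Rightarrow> bool" where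
  "lp_isometry p T \<longleftrightarrow>
     bij_betw T (lp_space p) (lp_space p) \<and>
     (\<forall>f\<in>lp_space p. \<forall>h\<in>lp_space p. T (\<lambda>n. f n + h n) = (\<lambda>n. T f n + T h n)) \<and>
     (\<forall>f\<in>lp_space p. \<forall>c. T (\<lambda>n. c * f n) = (\<lambda>n. c * T f n)) \<and>
     (\<forall>f\<in>lp_space p. lp_norm p (T f) = lp_norm p f)"

definition orth_rep :: "('g, 'b) monoid_scheme \<Rightarrow> real \<Rightarrow> ('g \<Rightarrow> (nat \<Rightarrow> complex) \<Rightarrow> (nat \<Rightarrow> complex)) \<Rightarrow> bool" where
  "orth_rep G p \<pi> \<longleftrightarrow>
     (\<forall>g\<in>carrier G. lp_isometry p (\<pi> g)) \<and>
     (\<forall>g\<in>carrier G. \<forall>h\<in>carrier G. \<forall>f\<in>lp_space p. \<pi> (g \<otimes>\<^bsub>G\<^esub> h) f = \<pi> g (\<pi> h f))"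

text \<open>Vectors of l_q invariant under the dual representation
  pi*(g) psi = psi o pi(g^{-1}) (as functionals via the pairing); invariance for all g.\<close>
definition dual_invariant :: "('g, 'b) monoid_scheme \<Rightarrow> real \<Rightarrow> ('g \<Rightarrow> (nat \<Rightarrow> complex) \<Rightarrow> (nat \<Rightarrow> complex)) \<Rightarrow> (nat \<Rightarrow> complex) set" where
  "dual_invariant G p \<pi> = {\<psi> \<in> lp_space (conj_exp p).
      \<forall>g\<in>carrier G. \<forall>f\<in>lp_space p. pairing (\<pi> (inv\<^bsub>G\<^esub> g) f) \<psi> = pairing f \<psi>}"

definition lp_prime :: "('g, 'b) monoid_scheme \<Rightarrow> real \<Rightarrow> ('g \<Rightarrow> (nat \<Rightarrow> complex) \<Rightarrow> (nat \<Rightarrow> complex)) \<Rightarrow> (nat \<Rightarrow> complex) set" where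
  "lp_prime G p \<pi> = {f \<in> lp_space p. \<forall>\<psi>\<in>dual_invariant G p \<pi>. pairing f \<psi> = 0}"

definition property_T_lp :: "('g, 'b) monoid_scheme \<Rightarrow> real \<Rightarrow> bool" where
  "property_T_lp G p \<longleftrightarrow> (\<forall>\<pi>. orth_rep G p \<pi> \<longrightarrow>
      \<not> (\<exists>f :: nat \<Rightarrow> nat \<Rightarrow> complex.
            (\<forall>n. f n \<in> lp_prime G p \<pi> \<and> lp_norm p (f n) = 1) \<and>
            (\<forall>g\<in>carrier G. (\<lambda>n. lp_norm p (\<lambda>k. \<pi> g (f n) k - f n k)) \<longlonglongrightarrow> 0)))"

end

theory Submission
  imports Defs
begin


lemma group_action_restrict:
  assumes G: "group G"
    and bij: "\<And>g. g \<in> carrier G \<Longrightarrow> bij_betw (\<psi> g) X X"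
    and mult: "\<And>g h x. g \<in> carrier G \<Longrightarrow> h \<in> carrier G \<Longrightarrow> x \<in> X \<Longrightarrow> \<psi> (g \<otimes>\<^bsub>G\<^esub> h) x = \<psi> g (\<psi> h x)"
  shows "group_action G X (\<lambda>g. restrict (\<psi> g) X)"
proof -
  have S1: "\<And>g. g \<in> carrier G \<Longrightarrow> restrict (\<psi> g) X \<in> Bij X"
    using bij by (auto simp: Bij_def bij_betw_def inj_on_def)
  have "(\<lambda>g. restrict (\<psi> g) X) \<in> hom G (BijGroup X)"
  proof (rule homI)
    fix g assume "g \<in> carrier G" thus "restrict (\<psi> g) X \<in> carrier (BijGroup X)"
      using S1 by (simp add: BijGroup_def)
  next
    fix g h assume g: "g \<in> carrier G" and h: "h \<in> carrier G"
    have gh: "g \<otimes>\<^bsub>G\<^esub> h \<in> carrier G" using G g h by (simp add: group.is_monoid monoid.m_closed)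
    have "restrict (\<psi> (g \<otimes>\<^bsub>G\<^esub> h)) X = compose X (restrict (\<psi> g) X) (restrict (\<psi> h) X)"
      using bij h mult[OF g h] by (auto simp: compose_def bij_betw_def fun_eq_iff)
    thus "restrict (\<psi> (g \<otimes>\<^bsub>G\<^esub> h)) X = restrict (\<psi> g) X \<otimes>\<^bsub>BijGroup X\<^esub> restrict (\<psi> h) X"
      using S1[OF g] S1[OF h] by (simp add: BijGroup_def)
  qed
  thus ?thesis unfolding group_action_def group_hom_def
    by (simp add: G group_BijGroup group_hom_axioms.intro)
qed


lemma powr_superadd_strict:
  fixes a b s :: real
  assumes "s > 1" "a > 0" "b > 0"
  shows "a powr s + b powr s < (a + b) powr s"
proof -
  have "a powr (s-1) < (a+b) powr (s-1)" using assms by (intro powr_less_mono2) auto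
  hence 1: "a * a powr (s-1) < a * (a+b) powr (s-1)" using assms by simp
  have "b powr (s-1) < (a+b) powr (s-1)" using assms by (intro powr_less_mono2) auto
  hence 2: "b * b powr (s-1) < b * (a+b) powr (s-1)" using assms by simp
  have e: "\<And>x. x \<ge> 0 \<Longrightarrow> x * x powr (s-1) = x powr s" by (simp add: powr_mult_base)
  have "a powr s + b powr s < a * (a+b) powr (s-1) + b * (a+b) powr (s-1)"
    using 1 2 e[of a] e[of b] assms by simp
  also have "\<dots> = (a+b) * (a+b) powr (s-1)" by (simp add: algebra_simps)
  also have "\<dots> = (a+b) powr s" using e[of "a+b"] assms by simp
  finally show ?thesis .
qed

lemma powr_subadd_strict:
  fixes a b s :: real
  assumes "0 < s" "s < 1" "a > 0" "b > 0"
  shows "(a + b) powr s < a powr s + b powr s"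
proof -
  have "(a+b) powr (s-1) < a powr (s-1)" using assms by (intro powr_less_mono2_neg) auto
  hence 1: "a * (a+b) powr (s-1) < a * a powr (s-1)" using assms by simp
  have "(a+b) powr (s-1) < b powr (s-1)" using assms by (intro powr_less_mono2_neg) auto
  hence 2: "b * (a+b) powr (s-1) < b * b powr (s-1)" using assms by simp
  have e: "\<And>x. x \<ge> 0 \<Longrightarrow> x * x powr (s-1) = x powr s" by (simp add: powr_mult_base)
  have "(a+b) powr s = (a+b) * (a+b) powr (s-1)" using e[of "a+b"] assms by simp
  also have "\<dots> = a * (a+b) powr (s-1) + b * (a+b) powr (s-1)" by (simp add: algebra_simps)
  also have "\<dots> < a powr s + b powr s"
    using 1 2 e[of a] e[of b] assms by simp
  finally show ?thesis .
qed

lemma powr_subadd: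
  fixes a b s :: real
  assumes "0 < s" "s \<le> 1" "a \<ge> 0" "b \<ge> 0"
  shows "(a + b) powr s \<le> a powr s + b powr s"
proof (cases "a = 0 \<or> b = 0")
  case True thus ?thesis by auto
next
  case False
  show ?thesis
  proof (cases "s = 1")
    case True thus ?thesis using assms by simp
  next
    case False2: False
    thus ?thesis using powr_subadd_strict[of s a b] assms False by simp
  qed
qed

lemma concave_powr:
  assumes "0 < s" "s \<le> 1" shows "concave_on {0<..} (\<lambda>x::real. x powr s)"
proof (rule f''_le0_imp_concave[where f' = "\<lambda>x. s * x powr (s-1)" and f'' = "\<lambda>x. s * ((s-1) * x powr (s-1-1))"])
  show "convex {0::real<..}" by simp
  fix x :: real assume x: "x \<in> {0<..}"
  show "DERIV (\<lambda>x. x powr s) x :> s * x powr (s-1)" using x by (simp add: has_real_derivative_powr)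
  show "DERIV (\<lambda>x. s * x powr (s-1)) x :> s * ((s-1) * x powr (s-1-1))"
    using x by (intro DERIV_cmult has_real_derivative_powr) simp
  show "s * ((s-1) * x powr (s-1-1)) \<le> 0" using x assms
    by (simp add: mult_nonneg_nonpos mult_nonpos_nonneg)
qed

lemma mid_convex:
  fixes x y s :: real
  assumes "1 \<le> s" "0 \<le> x" "0 \<le> y"
  shows "2 * ((x+y)/2) powr s \<le> x powr s + y powr s"
proof -
  have z: "2 * (y/2) powr s \<le> y powr s" if "0 \<le> y" for y :: real
  proof -
    have "2 powr 1 \<le> 2 powr s" using assms by (intro powr_mono) auto
    hence "2 \<le> 2 powr s" by simp
    hence "2 * y powr s \<le> 2 powr s * y powr s" by (simp add: mult_right_mono)
    thus ?thesis by (simp add: powr_divide field_simps)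
  qed
  show ?thesis
  proof (cases "x = 0 \<or> y = 0")
    case True thus ?thesis using z assms by auto
  next
    case False
    hence "x > 0" "y > 0" using assms by auto
    have c: "convex_on {0<..} (\<lambda>x::real. x powr s)" using assms powr_convex by simp
    have "((1/2) *\<^sub>R x + (1 - 1/2) *\<^sub>R y) powr s \<le> (1/2) * x powr s + (1 - 1/2) * y powr s"
      using convex_onD[OF c, of "1/2" x y] \<open>x>0\<close> \<open>y>0\<close> by simp
    thus ?thesis by (simp add: field_simps)
  qed
qed

lemma mid_concave:
  fixes x y s :: real
  assumes "0 < s" "s \<le> 1" "0 \<le> x" "0 \<le> y"
  shows "x powr s + y powr s \<le> 2 * ((x+y)/2) powr s"
proof -
  have z: "y powr s \<le> 2 * (y/2) powr s" if "0 \<le> y" for y :: real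
  proof -
    have "2 powr s \<le> 2 powr 1" using assms by (intro powr_mono) auto
    hence "2 powr s \<le> 2" by simp
    hence "2 powr s * y powr s \<le> 2 * y powr s" by (simp add: mult_right_mono)
    thus ?thesis by (simp add: powr_divide field_simps)
  qed
  show ?thesis
  proof (cases "x = 0 \<or> y = 0")
    case True thus ?thesis using z assms by auto
  next
    case False
    hence "x > 0" "y > 0" using assms by auto
    have c: "concave_on {0<..} (\<lambda>x::real. x powr s)" using assms concave_powr by simp
    have "(1/2) * x powr s + (1 - 1/2) * y powr s \<le> ((1/2) *\<^sub>R x + (1 - 1/2) *\<^sub>R y) powr s"
      using concave_onD[OF c, of "1/2" x y] \<open>x>0\<close> \<open>y>0\<close> by simp
    thus ?thesis by (simp add: field_simps)
  qed
qed


lemma cmod_powr_sq: "cmod z powr p = (cmod z ^ 2) powr (p/2)"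
proof -
  have "cmod z ^ 2 = cmod z powr 2"
    by (cases "z = 0") (simp_all add: powr_realpow)
  hence "(cmod z ^ 2) powr (p/2) = (cmod z powr 2) powr (p/2)" by simp
  also have "\<dots> = cmod z powr (2 * (p/2))" by (rule powr_powr)
  finally show ?thesis by simp
qed

lemma parallelogram_cmod: "cmod (a+b) ^ 2 + cmod (a-b) ^ 2 = 2 * (cmod a ^ 2 + cmod b ^ 2)"
  by (simp only: cmod_power2) (simp add: power2_eq_square algebra_simps)

definition clark :: "real \<Rightarrow> complex \<Rightarrow> complex \<Rightarrow> real" where
  "clark p a b = cmod (a+b) powr p + cmod (a-b) powr p - 2 * (cmod a powr p + cmod b powr p)"

lemma clark_disj: "a * b = 0 \<Longrightarrow> clark p a b = 0"
  by (auto simp: clark_def)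

lemma clark_gt2:
  assumes "p > 2"
  shows "clark p a b \<ge> 0" and "a \<noteq> 0 \<Longrightarrow> b \<noteq> 0 \<Longrightarrow> clark p a b > 0"
proof -
  define s where "s = p/2"
  have s: "s > 1" using assms s_def by simp
  define x y \<alpha> \<beta> where "x = cmod (a+b)^2" and "y = cmod (a-b)^2" and "\<alpha> = cmod a ^2" and "\<beta> = cmod b ^2"
  have xy: "(x+y)/2 = \<alpha> + \<beta>" using parallelogram_cmod[of a b] unfolding x_def y_def \<alpha>_def \<beta>_def by simp
  have cl: "clark p a b = x powr s + y powr s - 2 * (\<alpha> powr s + \<beta> powr s)"
    unfolding clark_def x_def y_def \<alpha>_def \<beta>_def s_def by (simp add: cmod_powr_sq[of _ p])
  have m: "2 * (\<alpha> + \<beta>) powr s \<le> x powr s + y powr s"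
    using mid_convex[of s x y] s unfolding xy by (simp add: x_def y_def)
  have w: "\<alpha> powr s + \<beta> powr s \<le> (\<alpha> + \<beta>) powr s"
  proof (cases "\<alpha> = 0 \<or> \<beta> = 0")
    case True thus ?thesis by auto
  next
    case False
    thus ?thesis using powr_superadd_strict[of s \<alpha> \<beta>] s by (simp add: \<alpha>_def \<beta>_def)
  qed
  show "clark p a b \<ge> 0" using cl m w by simp
  assume "a \<noteq> 0" "b \<noteq> 0"
  hence "\<alpha> > 0" "\<beta> > 0" by (auto simp: \<alpha>_def \<beta>_def)
  hence "\<alpha> powr s + \<beta> powr s < (\<alpha> + \<beta>) powr s" using powr_superadd_strict s by blast
  thus "clark p a b > 0" using cl m by simp
qed

lemma clark_lt2:
  assumes "0 < p" "p < 2"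
  shows "clark p a b \<le> 0" and "a \<noteq> 0 \<Longrightarrow> b \<noteq> 0 \<Longrightarrow> clark p a b < 0"
proof -
  define s where "s = p/2"
  have s: "s > 0" "s < 1" using assms s_def by auto
  define x y \<alpha> \<beta> where "x = cmod (a+b)^2" and "y = cmod (a-b)^2" and "\<alpha> = cmod a ^2" and "\<beta> = cmod b ^2"
  have xy: "(x+y)/2 = \<alpha> + \<beta>" using parallelogram_cmod[of a b] unfolding x_def y_def \<alpha>_def \<beta>_def by simp
  have cl: "clark p a b = x powr s + y powr s - 2 * (\<alpha> powr s + \<beta> powr s)"
    unfolding clark_def x_def y_def \<alpha>_def \<beta>_def s_def by (simp add: cmod_powr_sq[of _ p])
  have m: "x powr s + y powr s \<le> 2 * (\<alpha> + \<beta>) powr s"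
    using mid_concave[of s x y] s unfolding xy by (simp add: x_def y_def)
  have w: "(\<alpha> + \<beta>) powr s \<le> \<alpha> powr s + \<beta> powr s"
    using powr_subadd[of s \<alpha> \<beta>] s by (simp add: \<alpha>_def \<beta>_def)
  show "clark p a b \<le> 0" using cl m w by simp
  assume "a \<noteq> 0" "b \<noteq> 0"
  hence "\<alpha> > 0" "\<beta> > 0" by (auto simp: \<alpha>_def \<beta>_def)
  hence "(\<alpha> + \<beta>) powr s < \<alpha> powr s + \<beta> powr s" using powr_subadd_strict s by blast
  thus "clark p a b < 0" using cl m by simp
qed


definition PP :: "real \<Rightarrow> (nat \<Rightarrow> complex) \<Rightarrow> real" where
  "PP p f = infsum (\<lambda>n. cmod (f n) powr p) UNIV"

definition delta :: "nat \<Rightarrow> nat \<Rightarrow> complex" where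
  "delta k = (\<lambda>n. if n = k then 1 else 0)"

lemma PP_nonneg: "PP p f \<ge> 0"
  unfolding PP_def by (rule infsum_nonneg) simp

lemma lp_mono:
  assumes "f \<in> lp_space p" "\<And>n. cmod (h n) \<le> cmod (f n)" "p > 0"
  shows "h \<in> lp_space p"
  using assms unfolding lp_space_def
  by (auto intro!: summable_on_comparison_test[where f = "\<lambda>n. cmod (f n) powr p"] powr_mono2)

lemma powr_add_bound:
  fixes a b :: complex assumes "p > 0"
  shows "cmod (a + b) powr p \<le> 2 powr p * (cmod a powr p + cmod b powr p)"
proof -
  define m where "m = max (cmod a) (cmod b)"
  have "cmod (a+b) \<le> 2 * m" using norm_triangle_ineq[of a b] unfolding m_def by linarith
  hence "cmod (a+b) powr p \<le> (2*m) powr p" using assms by (intro powr_mono2) auto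
  also have "\<dots> = 2 powr p * m powr p" using m_def by (simp add: powr_mult)
  also have "m powr p \<le> cmod a powr p + cmod b powr p" unfolding m_def by (auto simp: max_def)
  hence "2 powr p * m powr p \<le> 2 powr p * (cmod a powr p + cmod b powr p)" by simp
  finally show ?thesis .
qed

lemma lp_add:
  assumes "f \<in> lp_space p" "h \<in> lp_space p" "p > 0"
  shows "(\<lambda>n. f n + h n) \<in> lp_space p"
proof -
  have "(\<lambda>n. 2 powr p * (cmod (f n) powr p + cmod (h n) powr p)) summable_on UNIV"
    using assms unfolding lp_space_def by (intro summable_on_cmult_right summable_on_add) auto
  thus ?thesis unfolding lp_space_def mem_Collect_eq
    by (rule summable_on_comparison_test) (use powr_add_bound[OF assms(3)] in auto)
qed

lemma lp_scale:
  assumes "f \<in> lp_space p"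
  shows "(\<lambda>n. c * f n) \<in> lp_space p"
proof -
  have "(\<lambda>n. cmod c powr p * cmod (f n) powr p) summable_on UNIV"
    using assms unfolding lp_space_def by (intro summable_on_cmult_right) auto
  thus ?thesis unfolding lp_space_def by (simp add: norm_mult powr_mult)
qed

lemma lp_diff:
  assumes "f \<in> lp_space p" "h \<in> lp_space p" "p > 0"
  shows "(\<lambda>n. f n - h n) \<in> lp_space p"
  using lp_add[OF assms(1) lp_scale[OF assms(2), of "-1"] assms(3)] by simp

lemma lp_zero: "(\<lambda>n. 0) \<in> lp_space p"
  unfolding lp_space_def by simp

lemma finite_support_summable:
  assumes "\<And>n. n \<notin> S \<Longrightarrow> g n = 0" "finite S"
  shows "g summable_on UNIV"
proof -
  have "g summable_on S" using assms(2) by simp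
  thus ?thesis using summable_on_cong_neutral[where S=S and T=UNIV and f=g and g=g] assms(1) by auto
qed

lemma summable_on_diff':
  fixes f g :: "'a \<Rightarrow> real"
  assumes "f summable_on A" "g summable_on A"
  shows "(\<lambda>x. f x - g x) summable_on A"
  using summable_on_add[OF assms(1) summable_on_uminus[THEN iffD2, OF assms(2)]] by simp

lemma infsum_diff':
  fixes f g :: "'a \<Rightarrow> real"
  assumes "f summable_on A" "g summable_on A"
  shows "infsum (\<lambda>x. f x - g x) A = infsum f A - infsum g A"
  using infsum_add[OF assms(1) summable_on_uminus[THEN iffD2, OF assms(2)]] by (simp add: infsum_uminus)

lemma lp_delta: "delta k \<in> lp_space p"
  unfolding lp_space_def delta_def mem_Collect_eq
  by (rule finite_support_summable[of "{k}"]) auto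

lemma lp_scale_delta: "(\<lambda>n. c * delta k n) \<in> lp_space p"
  by (rule lp_scale[OF lp_delta])

lemma infsum_single_point:
  assumes "\<And>n. n \<noteq> k \<Longrightarrow> g n = 0"
  shows "infsum g UNIV = g k"
proof -
  have "infsum g UNIV = infsum g {k}"
    by (rule infsum_cong_neutral) (use assms in auto)
  thus ?thesis by simp
qed

lemma PP_scale_delta: "p > 0 \<Longrightarrow> PP p (\<lambda>n. c * delta k n) = cmod c powr p"
  unfolding PP_def delta_def by (subst infsum_single_point[of k]) auto

lemma lp_norm_eq_iff:
  assumes "p > 0"
  shows "lp_norm p f = lp_norm p h \<longleftrightarrow> PP p f = PP p h"
proof -
  have a: "PP p f \<ge> 0" "PP p h \<ge> 0" by (rule PP_nonneg)+
  have "lp_norm p f = PP p f powr (1/p)" "lp_norm p h = PP p h powr (1/p)"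
    by (simp_all add: lp_norm_def PP_def)
  moreover have "x powr (1/p) = y powr (1/p) \<longleftrightarrow> x = y" if "x \<ge> 0" "y \<ge> 0" for x y :: real
  proof
    assume "x powr (1/p) = y powr (1/p)"
    hence "(x powr (1/p)) powr p = (y powr (1/p)) powr p" by simp
    thus "x = y" using that assms by (simp add: powr_powr)
  qed simp
  ultimately show ?thesis using a by simp
qed

lemma lp_norm_one_iff:
  assumes "p > 0"
  shows "lp_norm p f = 1 \<longleftrightarrow> PP p f = 1"
proof -
  have "lp_norm p (delta 0) = PP p (delta 0) powr (1/p)" by (simp add: lp_norm_def PP_def)
  moreover have "PP p (delta 0) = 1" using PP_scale_delta[OF assms, of 1 0] by simp
  ultimately have "lp_norm p (delta 0) = 1" by simp
  thus ?thesis using lp_norm_eq_iff[OF assms, of f "delta 0"] \<open>PP p (delta 0) = 1\<close> by simp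
qed

lemma summable_clark:
  assumes "f \<in> lp_space p" "h \<in> lp_space p" "p > 0"
  shows "(\<lambda>n. clark p (f n) (h n)) summable_on UNIV"
    and "infsum (\<lambda>n. clark p (f n) (h n)) UNIV =
         PP p (\<lambda>n. f n + h n) + PP p (\<lambda>n. f n - h n) - 2 * (PP p f + PP p h)"
proof -
  have s1: "(\<lambda>n. cmod (f n + h n) powr p) summable_on UNIV" using lp_add[OF assms] by (simp add: lp_space_def)
  have s2: "(\<lambda>n. cmod (f n - h n) powr p) summable_on UNIV" using lp_diff[OF assms] by (simp add: lp_space_def)
  have s3: "(\<lambda>n. cmod (f n) powr p) summable_on UNIV" "(\<lambda>n. cmod (h n) powr p) summable_on UNIV"
    using assms by (auto simp: lp_space_def)
  have s4: "(\<lambda>n. cmod (f n) powr p + cmod (h n) powr p) summable_on UNIV" using s3 by (rule summable_on_add)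
  have s5: "(\<lambda>n. 2 * (cmod (f n) powr p + cmod (h n) powr p)) summable_on UNIV"
    using s4 by (rule summable_on_cmult_right)
  have s6: "(\<lambda>n. cmod (f n + h n) powr p + cmod (f n - h n) powr p) summable_on UNIV"
    using s1 s2 by (rule summable_on_add)
  show "(\<lambda>n. clark p (f n) (h n)) summable_on UNIV"
    unfolding clark_def using summable_on_diff'[OF s6 s5] by simp
  have "infsum (\<lambda>n. clark p (f n) (h n)) UNIV =
      infsum (\<lambda>n. cmod (f n + h n) powr p + cmod (f n - h n) powr p) UNIV
      - infsum (\<lambda>n. 2 * (cmod (f n) powr p + cmod (h n) powr p)) UNIV"
    unfolding clark_def by (rule infsum_diff'[OF s6 s5])
  also have "\<dots> = PP p (\<lambda>n. f n + h n) + PP p (\<lambda>n. f n - h n) - 2 * (PP p f + PP p h)"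
    unfolding PP_def by (simp only: infsum_add[OF s1 s2] infsum_cmult_right[OF s4] infsum_add[OF s3])
  finally show "infsum (\<lambda>n. clark p (f n) (h n)) UNIV =
         PP p (\<lambda>n. f n + h n) + PP p (\<lambda>n. f n - h n) - 2 * (PP p f + PP p h)" .
qed

lemma disj_iff_PP:
  assumes "f \<in> lp_space p" "h \<in> lp_space p" "p > 0" "p \<noteq> 2"
  shows "(\<forall>n. f n * h n = 0) \<longleftrightarrow> PP p (\<lambda>n. f n + h n) + PP p (\<lambda>n. f n - h n) = 2 * (PP p f + PP p h)"
proof
  assume "\<forall>n. f n * h n = 0"
  hence "infsum (\<lambda>n. clark p (f n) (h n)) UNIV = 0" by (simp add: clark_disj)
  thus "PP p (\<lambda>n. f n + h n) + PP p (\<lambda>n. f n - h n) = 2 * (PP p f + PP p h)"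
    using summable_clark(2)[OF assms(1-3)] by simp
next
  assume e: "PP p (\<lambda>n. f n + h n) + PP p (\<lambda>n. f n - h n) = 2 * (PP p f + PP p h)"
  have z: "infsum (\<lambda>n. clark p (f n) (h n)) UNIV = 0" using summable_clark(2)[OF assms(1-3)] e by simp
  have sm: "(\<lambda>n. clark p (f n) (h n)) summable_on UNIV" by (rule summable_clark(1)[OF assms(1-3)])
  show "\<forall>n. f n * h n = 0"
  proof
    fix n
    show "f n * h n = 0"
    proof (cases "p > 2")
      case True
      have "clark p (f n) (h n) = 0"
        using nonneg_infsum_le_0D[OF _ sm, of n] z clark_gt2(1)[OF True] by simp
      thus ?thesis using clark_gt2(2)[OF True, of "f n" "h n"] by auto
    next
      case False
      hence p2: "p < 2" using assms by simp
      have sm': "(\<lambda>n. - clark p (f n) (h n)) summable_on UNIV" using summable_on_uminus[THEN iffD2, OF sm] .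
      have z': "infsum (\<lambda>n. - clark p (f n) (h n)) UNIV = 0" using z by (simp add: infsum_uminus)
      have "- clark p (f n) (h n) = 0"
        using nonneg_infsum_le_0D[OF _ sm', of n] z' clark_lt2(1)[OF assms(3) p2] by simp
      thus ?thesis using clark_lt2(2)[OF assms(3) p2, of "f n" "h n"] by auto
    qed
  qed
qed


locale iso =
  fixes p :: real and T :: "(nat \<Rightarrow> complex) \<Rightarrow> (nat \<Rightarrow> complex)"
  assumes p: "p > 0" "p \<noteq> 2" and T: "lp_isometry p T"
begin

lemma T_bij: "bij_betw T (lp_space p) (lp_space p)" using T by (simp add: lp_isometry_def)
lemma T_in: "u \<in> lp_space p \<Longrightarrow> T u \<in> lp_space p" by (rule bij_betw_apply[OF T_bij])
lemma T_inj: "u \<in> lp_space p \<Longrightarrow> v \<in> lp_space p \<Longrightarrow> T u = T v \<Longrightarrow> u = v"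
  using T_bij by (auto simp: bij_betw_def inj_on_def)
lemma T_surj: "w \<in> lp_space p \<Longrightarrow> \<exists>v\<in>lp_space p. T v = w"
  using T_bij by (metis bij_betw_def imageE)
lemma T_add: "f \<in> lp_space p \<Longrightarrow> h \<in> lp_space p \<Longrightarrow> T (\<lambda>n. f n + h n) = (\<lambda>n. T f n + T h n)"
  using T by (simp add: lp_isometry_def)
lemma T_scale: "f \<in> lp_space p \<Longrightarrow> T (\<lambda>n. c * f n) = (\<lambda>n. c * T f n)"
  using T by (simp add: lp_isometry_def)
lemma T_PP: "u \<in> lp_space p \<Longrightarrow> PP p (T u) = PP p u"
  using T lp_norm_eq_iff[OF p(1)] by (simp add: lp_isometry_def)

lemma T_diff: "f \<in> lp_space p \<Longrightarrow> h \<in> lp_space p \<Longrightarrow> T (\<lambda>n. f n - h n) = (\<lambda>n. T f n - T h n)"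
proof -
  assume f: "f \<in> lp_space p" and h: "h \<in> lp_space p"
  have "T (\<lambda>n. f n - h n) = T (\<lambda>n. f n + (-1) * h n)" by simp
  also have "\<dots> = (\<lambda>n. T f n + T (\<lambda>n. (-1) * h n) n)" using T_add[OF f lp_scale[OF h]] .
  also have "\<dots> = (\<lambda>n. T f n - T h n)" using T_scale[OF h, of "-1"] by simp
  finally show ?thesis .
qed

lemma T_zero: "T (\<lambda>n. 0) = (\<lambda>n. 0)"
  using T_scale[OF lp_zero, of 0] by simp

lemma T_disj:
  assumes f: "f \<in> lp_space p" and h: "h \<in> lp_space p"
  shows "(\<forall>n. f n * h n = 0) \<longleftrightarrow> (\<forall>n. T f n * T h n = 0)"
proof -
  have "(\<forall>n. T f n * T h n = 0) \<longleftrightarrow>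
      PP p (\<lambda>n. T f n + T h n) + PP p (\<lambda>n. T f n - T h n) = 2 * (PP p (T f) + PP p (T h))"
    by (rule disj_iff_PP[OF T_in[OF f] T_in[OF h] p])
  also have "\<dots> \<longleftrightarrow> PP p (\<lambda>n. f n + h n) + PP p (\<lambda>n. f n - h n) = 2 * (PP p f + PP p h)"
    using T_add[OF f h, symmetric] T_diff[OF f h, symmetric] T_PP[OF lp_add[OF f h p(1)]]
       T_PP[OF lp_diff[OF f h p(1)]] T_PP[OF f] T_PP[OF h] by simp
  also have "\<dots> \<longleftrightarrow> (\<forall>n. f n * h n = 0)" by (rule disj_iff_PP[OF f h p, symmetric])
  finally show ?thesis by simp
qed

lemma atom:
  "\<exists>j c. T (delta k) = (\<lambda>n. c * delta j n) \<and> cmod c = 1"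
proof -
  define u where "u = T (delta k)"
  have uin: "u \<in> lp_space p" unfolding u_def by (rule T_in[OF lp_delta])
  have "u \<noteq> (\<lambda>n. 0)"
  proof
    assume "u = (\<lambda>n. 0)"
    hence "T (delta k) = T (\<lambda>n. 0)" using T_zero u_def by simp
    hence "delta k = (\<lambda>n. 0)" using T_inj[OF lp_delta lp_zero] by blast
    thus False by (metis delta_def zero_neq_one)
  qed
  then obtain j where j: "u j \<noteq> 0" by auto
  have only: "u m = 0" if "m \<noteq> j" for m
  proof (rule ccontr)
    assume um: "u m \<noteq> 0"
    define u1 where "u1 = (\<lambda>n. u j * delta j n)"
    define u2 where "u2 = (\<lambda>n. u n - u1 n)"
    have u1in: "u1 \<in> lp_space p" unfolding u1_def by (rule lp_scale_delta)
    have u2in: "u2 \<in> lp_space p" unfolding u2_def by (rule lp_diff[OF uin u1in p(1)])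
    have disj: "\<forall>n. u1 n * u2 n = 0" by (auto simp: u1_def u2_def delta_def)
    obtain v1 where v1: "v1 \<in> lp_space p" "T v1 = u1" using T_surj[OF u1in] by blast
    obtain v2 where v2: "v2 \<in> lp_space p" "T v2 = u2" using T_surj[OF u2in] by blast
    have "T (\<lambda>n. v1 n + v2 n) = (\<lambda>n. u1 n + u2 n)" using T_add[OF v1(1) v2(1)] v1 v2 by simp
    also have "\<dots> = T (delta k)" by (simp add: u2_def u_def)
    finally have sum: "(\<lambda>n. v1 n + v2 n) = delta k"
      using T_inj[OF lp_add[OF v1(1) v2(1) p(1)] lp_delta] by blast
    have dv: "\<forall>n. v1 n * v2 n = 0" using T_disj[OF v1(1) v2(1)] disj v1 v2 by simp
    have off: "v1 n = 0 \<and> v2 n = 0" if "n \<noteq> k" for n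
    proof -
      have "v1 n + v2 n = 0" using fun_cong[OF sum, of n] that by (simp add: delta_def)
      moreover have "v1 n * v2 n = 0" using dv by simp
      ultimately show ?thesis by auto
    qed
    show False
    proof (cases "v1 k = 0")
      case True
      hence "v1 = (\<lambda>n. 0)" using off by (intro ext) (metis)
      hence "u1 = (\<lambda>n. 0)" using v1 T_zero by simp
      moreover have "u1 j = u j" by (simp add: u1_def delta_def)
      ultimately show False using j by simp
    next
      case False
      hence "v2 k = 0" using dv by auto
      hence "v2 = (\<lambda>n. 0)" using off by (intro ext) (metis)
      hence "u2 = (\<lambda>n. 0)" using v2 T_zero by simp
      moreover have "u2 m = u m" using that by (simp add: u2_def u1_def delta_def)
      ultimately show False using um by simp
    qed
  qed
  have ueq: "u = (\<lambda>n. u j * delta j n)"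
    using only by (auto simp: delta_def)
  have "PP p u = PP p (delta k)" unfolding u_def by (rule T_PP[OF lp_delta])
  hence "cmod (u j) powr p = 1"
    using PP_scale_delta[OF p(1), of "u j" j] PP_scale_delta[OF p(1), of 1 k] ueq by simp
  moreover have "(cmod (u j) powr p) powr (1/p) = cmod (u j)" using p(1) by (simp add: powr_powr)
  ultimately have "cmod (u j) = 1" by simp
  thus ?thesis using ueq u_def by blast
qed

definition sig :: "nat \<Rightarrow> nat" where "sig k = (SOME j. T (delta k) j \<noteq> 0)"
definition coef :: "nat \<Rightarrow> complex" where "coef k = T (delta k) (sig k)"

lemma atom': "T (delta k) = (\<lambda>n. coef k * delta (sig k) n)" and coef_norm: "cmod (coef k) = 1"
proof -
  obtain j c where jc: "T (delta k) = (\<lambda>n. c * delta j n)" "cmod c = 1" using atom by blast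
  have "T (delta k) j \<noteq> 0" using jc by (auto simp: delta_def)
  hence "T (delta k) (sig k) \<noteq> 0" unfolding sig_def by (rule someI)
  hence sj: "sig k = j" using jc by (auto simp: delta_def split: if_splits)
  show "T (delta k) = (\<lambda>n. coef k * delta (sig k) n)" using jc sj by (simp add: coef_def delta_def)
  show "cmod (coef k) = 1" using jc sj by (simp add: coef_def delta_def)
qed

lemma coord: assumes f: "f \<in> lp_space p" shows "T f (sig k) = coef k * f k"
proof -
  define r where "r = (\<lambda>n. f n - f k * delta k n)"
  have rin: "r \<in> lp_space p" unfolding r_def by (rule lp_diff[OF f lp_scale_delta p(1)])
  have "\<forall>n. r n * delta k n = 0" by (auto simp: r_def delta_def)
  hence "\<forall>n. T r n * T (delta k) n = 0" using T_disj[OF rin lp_delta] by simp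
  hence r0: "T r (sig k) = 0" using atom' coef_norm[of k] by (auto simp: delta_def dest: spec[of _ "sig k"])
  have "f = (\<lambda>n. r n + f k * delta k n)" by (simp add: r_def)
  hence "T f = (\<lambda>n. T r n + T (\<lambda>n. f k * delta k n) n)" using T_add[OF rin lp_scale_delta] by metis
  also have "\<dots> = (\<lambda>n. T r n + f k * T (delta k) n)" using T_scale[OF lp_delta] by simp
  finally show ?thesis using r0 atom' by (simp add: delta_def)
qed

lemma sig_bij: "bij sig"
proof (rule bijI)
  show "inj sig"
  proof (rule injI)
    fix k k' assume e: "sig k = sig k'"
    show "k = k'"
    proof (rule ccontr)
      assume "k \<noteq> k'"
      hence "\<forall>n. delta k n * delta k' n = 0" by (simp add: delta_def)
      hence "\<forall>n. T (delta k) n * T (delta k') n = 0" using T_disj[OF lp_delta lp_delta] by simp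
      hence "T (delta k) (sig k) * T (delta k') (sig k) = 0" by simp
      thus False using e atom'[of k] atom'[of k'] coef_norm[of k] coef_norm[of k']
        by (auto simp: delta_def)
    qed
  qed
  show "surj sig"
  proof -
    have "j \<in> range sig" for j
    proof -
      obtain v where v: "v \<in> lp_space p" "T v = delta j" using T_surj[OF lp_delta] by blast
      have "v \<noteq> (\<lambda>n. 0)" using v T_zero by (metis delta_def zero_neq_one)
      then obtain k where "v k \<noteq> 0" by auto
      hence "T v (sig k) \<noteq> 0" using coord[OF v(1), of k] coef_norm[of k] by auto
      hence "sig k = j" using v by (simp add: delta_def split: if_splits)
      thus ?thesis by blast
    qed
    thus ?thesis by blast
  qed
qed

end


lemma card_fiber_sum:
  assumes "finite S" "finite W" "f ` S \<subseteq> W"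
  shows "(\<Sum>w\<in>W. card {x\<in>S. f x = w}) = card S"
  using sum.group[OF assms, of "\<lambda>_. 1::nat"] by (simp add: card_eq_sum[symmetric])

lemma fiber_diff_sum:
  assumes fB: "finite B" and fB': "finite B'" and fW: "finite W" and sub: "f ` (B \<union> B') \<subseteq> W"
  shows "(\<Sum>w\<in>W. \<bar>real (card {x\<in>B'. f x = w}) - real (card {x\<in>B. f x = w})\<bar>)
          \<le> real (card (B' - B)) + real (card (B - B'))"
proof -
  have split: "card {x\<in>S. f x = w} = card {x\<in>S \<inter> T. f x = w} + card {x\<in>S - T. f x = w}"
    if "finite S" for S T w
  proof -
    have "{x\<in>S. f x = w} = {x\<in>S \<inter> T. f x = w} \<union> {x\<in>S - T. f x = w}" by auto
    thus ?thesis using that by (simp add: card_Un_disjoint[symmetric] disjoint_iff)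
  qed
  have "\<bar>real (card {x\<in>B'. f x = w}) - real (card {x\<in>B. f x = w})\<bar>
        \<le> real (card {x\<in>B' - B. f x = w}) + real (card {x\<in>B - B'. f x = w})" for w
  proof -
    have "B' \<inter> B = B \<inter> B'" by auto
    thus ?thesis using split[OF fB', where T=B and w=w] split[OF fB, where T=B' and w=w] by simp
  qed
  hence "(\<Sum>w\<in>W. \<bar>real (card {x\<in>B'. f x = w}) - real (card {x\<in>B. f x = w})\<bar>)
       \<le> (\<Sum>w\<in>W. real (card {x\<in>B' - B. f x = w}) + real (card {x\<in>B - B'. f x = w}))"
    by (rule sum_mono)
  also have "\<dots> = real (\<Sum>w\<in>W. card {x\<in>B' - B. f x = w}) + real (\<Sum>w\<in>W. card {x\<in>B - B'. f x = w})"
    by (simp add: sum.distrib)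
  also have "(\<Sum>w\<in>W. card {x\<in>B' - B. f x = w}) = card (B' - B)"
    by (rule card_fiber_sum) (use fB' fW sub in auto)
  also have "(\<Sum>w\<in>W. card {x\<in>B - B'. f x = w}) = card (B - B')"
    by (rule card_fiber_sum) (use fB fW sub in auto)
  finally show ?thesis .
qed

context
  fixes F :: "'g set" and N :: nat and a :: "'g \<Rightarrow> complex"
  assumes fF: "finite F" and N: "N > 0"
begin

definition box where "box = PiE F (\<lambda>_. {..<N})"
definition pr where "pr e = (\<Prod>h\<in>F. a h ^ e h)"
definition sh where "sh g e = e(g := Suc (e g))"

lemma finite_box: "finite box" unfolding box_def using fF by (simp add: finite_PiE)

lemma card_box: "card box = N ^ card F"
  unfolding box_def using fF by (simp add: card_PiE)

lemma pr_sh: assumes "g \<in> F" shows "pr (sh g e) = a g * pr e"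
proof -
  have "pr (sh g e) = a g ^ sh g e g * (\<Prod>h\<in>F - {g}. a h ^ sh g e h)"
    unfolding pr_def by (rule prod.remove[OF fF assms])
  also have "sh g e g = Suc (e g)" by (simp add: sh_def)
  also have "(\<Prod>h\<in>F - {g}. a h ^ sh g e h) = (\<Prod>h\<in>F - {g}. a h ^ e h)"
    by (rule prod.cong) (auto simp: sh_def)
  moreover have "pr e = a g ^ e g * (\<Prod>h\<in>F - {g}. a h ^ e h)"
    unfolding pr_def by (rule prod.remove[OF fF assms])
  ultimately show ?thesis by simp
qed

lemma card_slice:
  assumes "g \<in> F" "k < N"
  shows "card {e\<in>box. e g = k} = N ^ (card F - 1)"
proof -
  have "{e\<in>box. e g = k} = PiE F (\<lambda>h. if h = g then {k} else {..<N})"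
    unfolding box_def using assms by (auto simp: PiE_iff extensional_def split: if_splits)
  hence "card {e\<in>box. e g = k} = (\<Prod>h\<in>F. card (if h = g then {k} else {..<N}))"
    using fF by (simp add: card_PiE)
  also have "\<dots> = card (if g = g then {k} else {..<N}) * (\<Prod>h\<in>F - {g}. card (if h = g then {k} else {..<N}))"
    using prod.remove[OF fF assms(1)] by blast
  also have "(\<Prod>h\<in>F - {g}. card (if h = g then {k} else {..<N})) = (\<Prod>h\<in>F - {g}. N)"
    by (rule prod.cong) auto
  also have "\<dots> = N ^ (card F - 1)" using fF assms by simp
  finally show ?thesis by simp
qed

lemma sh_inj: "inj (sh g)"
proof (rule injI)
  fix x y assume e: "sh g x = sh g y"
  show "x = y"
  proof
    fix h
    show "x h = y h" using fun_cong[OF e, of h] by (cases "h = g") (auto simp: sh_def)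
  qed
qed

lemma folner_count:
  assumes g: "g \<in> F" and fW: "finite W" and sub: "pr ` box \<union> (\<lambda>x. a g * x) ` pr ` box \<subseteq> W"
  shows "(\<Sum>w\<in>W. \<bar>real (card {e\<in>box. a g * pr e = w}) - real (card {e\<in>box. pr e = w})\<bar>)
          \<le> 2 * real N ^ (card F - 1)"
proof -
  define B' where "B' = sh g ` box"
  have fB': "finite B'" unfolding B'_def using finite_box by simp
  have c1: "card {e\<in>box. a g * pr e = w} = card {x\<in>B'. pr x = w}" for w
  proof -
    have "{x\<in>B'. pr x = w} = sh g ` {e\<in>box. a g * pr e = w}"
      unfolding B'_def using pr_sh[OF g] by auto
    thus ?thesis using card_image[OF inj_on_subset[OF sh_inj subset_UNIV], of g "{e\<in>box. a g * pr e = w}"] by simp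
  qed
  have sub': "pr ` (box \<union> B') \<subseteq> W"
    using sub pr_sh[OF g] unfolding B'_def by (auto simp: image_subset_iff)
  have "(\<Sum>w\<in>W. \<bar>real (card {e\<in>box. a g * pr e = w}) - real (card {e\<in>box. pr e = w})\<bar>)
      \<le> real (card (B' - box)) + real (card (box - B'))"
    unfolding c1 by (rule fiber_diff_sum[OF finite_box fB' fW sub'])
  also have "card (box - B') \<le> N ^ (card F - 1)"
  proof -
    have "box - B' \<subseteq> {e\<in>box. e g = 0}"
    proof
      fix e assume e: "e \<in> box - B'"
      show "e \<in> {e\<in>box. e g = 0}"
      proof (rule ccontr)
        assume "e \<notin> {e\<in>box. e g = 0}"
        hence eg: "e g \<noteq> 0" using e by auto
        define e' where "e' = e(g := e g - 1)"
        have "e' \<in> box" using e eg g unfolding e'_def box_def by (auto simp: PiE_iff extensional_def)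
        moreover have "sh g e' = e" using eg unfolding sh_def e'_def by auto
        ultimately have "e \<in> B'" unfolding B'_def by force
        thus False using e by simp
      qed
    qed
    hence "card (box - B') \<le> card {e\<in>box. e g = 0}"
      by (rule card_mono[rotated]) (use finite_box in simp)
    thus ?thesis using card_slice[OF g N] by simp
  qed
  also have "card (B' - box) \<le> N ^ (card F - 1)"
  proof -
    have "B' - box \<subseteq> sh g ` {e\<in>box. e g = N - 1}"
    proof
      fix x assume x: "x \<in> B' - box"
      then obtain e where e: "e \<in> box" "x = sh g e" unfolding B'_def by auto
      have "e g < N" using e g unfolding box_def by auto
      moreover have "\<not> Suc (e g) < N"
      proof
        assume "Suc (e g) < N"
        hence "x \<in> box" using e g unfolding box_def sh_def by (auto simp: PiE_iff extensional_def)
        thus False using x by simp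
      qed
      ultimately have "e g = N - 1" by simp
      thus "x \<in> sh g ` {e\<in>box. e g = N - 1}" using e by auto
    qed
    hence "card (B' - box) \<le> card (sh g ` {e\<in>box. e g = N - 1})"
      by (rule card_mono[rotated]) (use finite_box in simp)
    also have "\<dots> \<le> card {e\<in>box. e g = N - 1}" by (rule card_image_le) (use finite_box in simp)
    finally show ?thesis using card_slice[OF g, of "N - 1"] N by simp
  qed
  ultimately show ?thesis
    by (smt (verit, best) of_nat_le_iff of_nat_power)
qed

end


lemma sqrt_diff_sq_le: "a \<ge> 0 \<Longrightarrow> b \<ge> 0 \<Longrightarrow> (sqrt a - sqrt b)^2 \<le> \<bar>a - b\<bar>"
proof -
  assume a: "a \<ge> 0" and b: "b \<ge> 0"
  have "(sqrt a - sqrt b)^2 = \<bar>sqrt a - sqrt b\<bar> * \<bar>sqrt a - sqrt b\<bar>" by (simp add: power2_eq_square)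
  also have "\<dots> \<le> \<bar>sqrt a - sqrt b\<bar> * (sqrt a + sqrt b)"
    by (rule mult_left_mono) (use real_sqrt_ge_zero[OF a] real_sqrt_ge_zero[OF b] in \<open>auto simp: abs_if\<close>)
  also have "\<dots> = \<bar>(sqrt a - sqrt b) * (sqrt a + sqrt b)\<bar>" using a b by (simp add: abs_mult)
  also have "(sqrt a - sqrt b) * (sqrt a + sqrt b) = a - b" using a b by (simp add: algebra_simps)
  finally show ?thesis .
qed

lemma fin_supp:
  fixes g :: "'a \<Rightarrow> real"
  assumes "finite S" "\<And>x. x \<in> X \<Longrightarrow> x \<notin> S \<Longrightarrow> g x = 0"
  shows "g summable_on X" "infsum g X = sum g (X \<inter> S)"
proof -
  have e: "infsum g X = infsum g (X \<inter> S)" by (rule infsum_cong_neutral) (use assms in auto)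
  have "g summable_on (X \<inter> S)" using assms(1) by simp
  thus "g summable_on X" using summable_on_cong_neutral[where S="X \<inter> S" and T=X and f=g and g=g] assms(2) by auto
  show "infsum g X = sum g (X \<inter> S)" using e assms(1) by simp
qed

lemma no_character:
  fixes G :: "('g, 'b) monoid_scheme" and chr :: "'g \<Rightarrow> complex"
  assumes G: "group G" and cG: "countable (carrier G)" and PF: "property_F G"
    and hom: "\<And>g h. g \<in> carrier G \<Longrightarrow> h \<in> carrier G \<Longrightarrow> chr (g \<otimes>\<^bsub>G\<^esub> h) = chr g * chr h"
    and nz: "\<And>g. g \<in> carrier G \<Longrightarrow> chr g \<noteq> 0"
  shows "\<And>g. g \<in> carrier G \<Longrightarrow> chr g = 1"
proof -
  have one: "\<one>\<^bsub>G\<^esub> \<in> carrier G" using G by (simp add: group.is_monoid monoid.one_closed)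
  have mc: "\<And>g h. g \<in> carrier G \<Longrightarrow> h \<in> carrier G \<Longrightarrow> g \<otimes>\<^bsub>G\<^esub> h \<in> carrier G"
    using G by (simp add: group.is_monoid monoid.m_closed)
  have ic: "\<And>g. g \<in> carrier G \<Longrightarrow> inv\<^bsub>G\<^esub> g \<in> carrier G" using G by (simp add: group.inv_closed)
  have chi1: "chr \<one>\<^bsub>G\<^esub> = 1"
  proof -
    have "chr \<one>\<^bsub>G\<^esub> = chr \<one>\<^bsub>G\<^esub> * chr \<one>\<^bsub>G\<^esub>" using hom[OF one one] G one
      by (simp add: group.is_monoid monoid.l_one)
    thus ?thesis using nz[OF one] by simp
  qed
  have chiinv: "\<And>g. g \<in> carrier G \<Longrightarrow> chr g * chr (inv\<^bsub>G\<^esub> g) = 1"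
  proof -
    fix g assume g: "g \<in> carrier G"
    have "chr (g \<otimes>\<^bsub>G\<^esub> inv\<^bsub>G\<^esub> g) = chr g * chr (inv\<^bsub>G\<^esub> g)" by (rule hom[OF g ic[OF g]])
    moreover have "g \<otimes>\<^bsub>G\<^esub> inv\<^bsub>G\<^esub> g = \<one>\<^bsub>G\<^esub>" by (rule group.r_inv[OF G g])
    ultimately show "chr g * chr (inv\<^bsub>G\<^esub> g) = 1" using chi1 by simp
  qed
  define A where "A = chr ` carrier G"
  have cA: "countable A" unfolding A_def using cG by simp
  have A1: "1 \<in> A" unfolding A_def using chi1 one by force
  have Amul: "\<And>x y. x \<in> A \<Longrightarrow> y \<in> A \<Longrightarrow> x * y \<in> A"
  proof -
    fix x y assume "x \<in> A" "y \<in> A"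
    then obtain g h where gh: "g \<in> carrier G" "h \<in> carrier G" "x = chr g" "y = chr h" unfolding A_def by auto
    hence "x * y = chr (g \<otimes>\<^bsub>G\<^esub> h)" using hom by simp
    thus "x * y \<in> A" unfolding A_def using mc[OF gh(1,2)] by blast
  qed
  have Anz: "\<And>x. x \<in> A \<Longrightarrow> x \<noteq> 0" unfolding A_def using nz by auto
  have Achi: "\<And>g. g \<in> carrier G \<Longrightarrow> chr g \<in> A" unfolding A_def by simp
  define enc where "enc = to_nat_on A"
  define dec where "dec = from_nat_into A"
  have decenc: "\<And>w. w \<in> A \<Longrightarrow> dec (enc w) = w" unfolding enc_def dec_def using cA by simp
  have encinj: "inj_on enc A" unfolding enc_def using cA by auto
  define X where "X = enc ` A"
  have bijX: "bij_betw enc A X" unfolding X_def using encinj by (simp add: bij_betw_def)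
  have decX: "\<And>x. x \<in> X \<Longrightarrow> dec x \<in> A \<and> enc (dec x) = x" unfolding X_def using decenc by auto
  define \<psi> where "\<psi> g x = enc (chr g * dec x)" for g x
  have \<psi>X: "\<And>g x. g \<in> carrier G \<Longrightarrow> x \<in> X \<Longrightarrow> \<psi> g x \<in> X"
    unfolding \<psi>_def X_def using decX Amul Achi X_def by blast
  have \<psi>comp: "\<And>g h x. g \<in> carrier G \<Longrightarrow> h \<in> carrier G \<Longrightarrow> x \<in> X \<Longrightarrow> \<psi> (g \<otimes>\<^bsub>G\<^esub> h) x = \<psi> g (\<psi> h x)"
  proof -
    fix g h x assume g: "g \<in> carrier G" and h: "h \<in> carrier G" and x: "x \<in> X"
    have "chr h * dec x \<in> A" using Amul Achi[OF h] decX[OF x] by blast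
    hence "dec (\<psi> h x) = chr h * dec x" unfolding \<psi>_def using decenc by blast
    thus "\<psi> (g \<otimes>\<^bsub>G\<^esub> h) x = \<psi> g (\<psi> h x)" unfolding \<psi>_def using hom[OF g h] by (simp add: mult.assoc)
  qed
  have \<psi>one: "\<And>x. x \<in> X \<Longrightarrow> \<psi> \<one>\<^bsub>G\<^esub> x = x" unfolding \<psi>_def using chi1 decX by simp
  have \<psi>bij: "\<And>g. g \<in> carrier G \<Longrightarrow> bij_betw (\<psi> g) X X"
  proof -
    fix g assume g: "g \<in> carrier G"
    show "bij_betw (\<psi> g) X X"
    proof (rule bij_betw_byWitness[where f' = "\<psi> (inv\<^bsub>G\<^esub> g)"])
      show "\<forall>x\<in>X. \<psi> (inv\<^bsub>G\<^esub> g) (\<psi> g x) = x"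
        using \<psi>comp[OF ic[OF g] g] \<psi>one G g by (metis group.l_inv)
      show "\<forall>x\<in>X. \<psi> g (\<psi> (inv\<^bsub>G\<^esub> g) x) = x"
        using \<psi>comp[OF g ic[OF g]] \<psi>one G g by (metis group.r_inv)
      show "\<psi> g ` X \<subseteq> X" using \<psi>X g by blast
      show "\<psi> (inv\<^bsub>G\<^esub> g) ` X \<subseteq> X" using \<psi>X ic g by blast
    qed
  qed
  define \<phi> where "\<phi> = (\<lambda>g. restrict (\<psi> g) X)"
  have act: "group_action G X \<phi>" unfolding \<phi>_def
    by (rule group_action_restrict[OF G \<psi>bij \<psi>comp])
  have prA: "\<And>S e. finite S \<Longrightarrow> S \<subseteq> carrier G \<Longrightarrow> (\<Prod>h\<in>S. chr h ^ e h) \<in> A"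
  proof -
    fix S :: "'g set" and e :: "'g \<Rightarrow> nat"
    assume "finite S" "S \<subseteq> carrier G"
    thus "(\<Prod>h\<in>S. chr h ^ e h) \<in> A"
    proof (induction S rule: finite_induct)
      case empty thus ?case using A1 by simp
    next
      case (insert x S)
      have "chr x ^ n \<in> A" for n
        by (induction n) (use A1 Amul Achi insert.prems in auto)
      thus ?case using insert Amul by simp
    qed
  qed
  have amen: "amenable_action G X \<phi>"
    unfolding amenable_action_def
  proof (intro conjI act allI impI)
    fix Fs :: "'g set" and \<epsilon> :: real
    assume "finite Fs \<and> Fs \<subseteq> carrier G \<and> 0 < \<epsilon>"
    hence fFs: "finite Fs" and Fs: "Fs \<subseteq> carrier G" and eps: "\<epsilon> > 0" by auto
    obtain N :: nat where N: "2 / \<epsilon>^2 < real N" using reals_Archimedean2 by blast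
    have N0: "N > 0" using N eps by (metis divide_pos_pos of_nat_0_less_iff order_less_trans zero_less_numeral zero_less_power)
    define m where "m = card Fs"
    define K where "K = real N ^ m"
    have K0: "K > 0" unfolding K_def using N0 by simp
    define B where "B = box Fs N"
    define pr' where "pr' = pr Fs chr"
    have fB: "finite B" unfolding B_def using finite_box[OF fFs N0] .
    have cB: "card B = N ^ m" unfolding B_def m_def using card_box[OF fFs N0] .
    have prA': "\<And>e. pr' e \<in> A" unfolding pr'_def pr_def[OF fFs N0] using prA[OF fFs Fs] .
    define U where "U w = real (card {e\<in>B. pr' e = w}) / K" for w
    have U0: "\<And>w. U w \<ge> 0" unfolding U_def using K0 by simp
    define S0 where "S0 = pr' ` B"
    have fS0: "finite S0" unfolding S0_def using fB by simp
    have S0A: "S0 \<subseteq> A" unfolding S0_def using prA' by auto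
    have Uz: "\<And>w. w \<notin> S0 \<Longrightarrow> U w = 0"
    proof -
      fix w assume "w \<notin> S0"
      hence "{e\<in>B. pr' e = w} = {}" unfolding S0_def by auto
      hence "card {e\<in>B. pr' e = w} = 0" by (metis card.empty)
      thus "U w = 0" unfolding U_def by simp
    qed
    define f where "f x = complex_of_real (sqrt (U (dec x)))" for x
    have fsq: "\<And>x. (cmod (f x))^2 = U (dec x)" unfolding f_def using U0 by simp
    have supX: "\<And>x. x \<in> X \<Longrightarrow> x \<notin> enc ` S0 \<Longrightarrow> U (dec x) = 0"
      using decX Uz by (metis image_eqI)
    have "l2_vec X f" unfolding l2_vec_def fsq
      by (rule fin_supp(1)[of "enc ` S0"]) (use fS0 supX in auto)
    moreover have "l2_norm X f = 1"
    proof -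
      have "infsum (\<lambda>x. (cmod (f x))^2) X = infsum (\<lambda>x. U (dec x)) X" by (simp add: fsq)
      also have "\<dots> = infsum (\<lambda>w. U (dec (enc w))) A" by (rule infsum_reindex_bij_betw[OF bijX, symmetric])
      also have "\<dots> = infsum U A" by (rule infsum_cong) (simp add: decenc)
      also have "\<dots> = sum U (A \<inter> S0)" by (rule fin_supp(2)) (use fS0 Uz in auto)
      also have "A \<inter> S0 = S0" using S0A by auto
      also have "sum U S0 = real (\<Sum>w\<in>S0. card {e\<in>B. pr' e = w}) / K"
        unfolding U_def by (simp add: sum_divide_distrib)
      also have "(\<Sum>w\<in>S0. card {e\<in>B. pr' e = w}) = card B"
        by (rule card_fiber_sum) (use fB fS0 S0_def in auto)
      finally show ?thesis unfolding l2_norm_def using cB K_def K0 by simp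
    qed
    moreover have "\<forall>g\<in>Fs. l2_norm X (\<lambda>x. perm_rep G \<phi> g f x - f x) < \<epsilon>"
    proof
      fix g assume gF: "g \<in> Fs"
      have g: "g \<in> carrier G" using gF Fs by auto
      define c where "c = chr g"
      define ci where "ci = chr (inv\<^bsub>G\<^esub> g)"
      have cci: "c * ci = 1" unfolding c_def ci_def using chiinv[OF g] .
      have ciA: "\<And>w. w \<in> A \<Longrightarrow> ci * w \<in> A" unfolding ci_def using Amul Achi ic g by blast
      define E where "E w = (sqrt (U (ci * w)) - sqrt (U w))^2" for w
      have "infsum (\<lambda>x. (cmod (perm_rep G \<phi> g f x - f x))^2) X = infsum (\<lambda>x. E (dec x)) X"
      proof (rule infsum_cong)
        fix x assume x: "x \<in> X"
        have "perm_rep G \<phi> g f x = f (enc (ci * dec x))"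
          unfolding perm_rep_def \<phi>_def \<psi>_def ci_def using x by simp
        also have "\<dots> = complex_of_real (sqrt (U (ci * dec x)))"
          unfolding f_def using decenc ciA decX[OF x] by simp
        finally have "perm_rep G \<phi> g f x - f x = complex_of_real (sqrt (U (ci * dec x)) - sqrt (U (dec x)))"
          unfolding f_def by simp
        thus "(cmod (perm_rep G \<phi> g f x - f x))^2 = E (dec x)"
          unfolding E_def by (simp only: norm_of_real power2_abs)
      qed
      also have "\<dots> = infsum (\<lambda>w. E (dec (enc w))) A" by (rule infsum_reindex_bij_betw[OF bijX, symmetric])
      also have "\<dots> = infsum E A" by (rule infsum_cong) (simp add: decenc)
      also have "\<dots> = sum E (A \<inter> (S0 \<union> (\<lambda>x. c * x) ` S0))"
      proof (rule fin_supp(2))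
        show "finite (S0 \<union> (\<lambda>x. c * x) ` S0)" using fS0 by simp
        fix w assume "w \<in> A" "w \<notin> S0 \<union> (\<lambda>x. c * x) ` S0"
        hence "w \<notin> S0" "ci * w \<notin> S0" using cci by (auto simp: image_iff mult.assoc[symmetric])
        thus "E w = 0" unfolding E_def using Uz by simp
      qed
      also have "\<dots> \<le> sum E (S0 \<union> (\<lambda>x. c * x) ` S0)"
        by (rule sum_mono2) (use fS0 in \<open>auto simp: E_def\<close>)
      also have "\<dots> \<le> (\<Sum>w\<in>S0 \<union> (\<lambda>x. c * x) ` S0. \<bar>U (ci * w) - U w\<bar>)"
        unfolding E_def by (rule sum_mono) (rule sqrt_diff_sq_le[OF U0 U0])
      also have "\<dots> = (\<Sum>w\<in>S0 \<union> (\<lambda>x. c * x) ` S0.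
            \<bar>real (card {e\<in>B. c * pr' e = w}) - real (card {e\<in>B. pr' e = w})\<bar>) / K"
      proof -
        have "{e\<in>B. pr' e = ci * w} = {e\<in>B. c * pr' e = w}" for w
        proof -
          have "pr' e = ci * w \<longleftrightarrow> c * pr' e = w" for e
            using cci by (metis mult.assoc mult.commute mult.left_neutral)
          thus ?thesis by auto
        qed
        thus ?thesis unfolding U_def using K0
          by (simp add: sum_divide_distrib diff_divide_distrib[symmetric] abs_divide)
      qed
      also have "\<dots> \<le> (2 * real N ^ (m - 1)) / K"
      proof (rule divide_right_mono)
        show "0 \<le> K" using K0 by simp
        have "(\<Sum>w\<in>S0 \<union> (\<lambda>x. chr g * x) ` S0.
            \<bar>real (card {e\<in>box Fs N. chr g * pr Fs chr e = w}) - real (card {e\<in>box Fs N. pr Fs chr e = w})\<bar>)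
             \<le> 2 * real N ^ (card Fs - 1)"
          by (rule folner_count[OF fFs N0 gF]) (use fS0 in \<open>auto simp: S0_def B_def pr'_def\<close>)
        thus "(\<Sum>w\<in>S0 \<union> (\<lambda>x. c * x) ` S0.
            \<bar>real (card {e\<in>B. c * pr' e = w}) - real (card {e\<in>B. pr' e = w})\<bar>) \<le> 2 * real N ^ (m - 1)"
          unfolding c_def B_def pr'_def m_def .
      qed
      also have "\<dots> = 2 / real N"
      proof -
        have m1: "m \<ge> 1" unfolding m_def using gF fFs by (metis One_nat_def Suc_leI card_gt_0_iff empty_iff)
        have "K = real N ^ (m - 1) * real N" unfolding K_def using m1
          by (metis One_nat_def Suc_diff_le diff_Suc_1 power_Suc2)
        thus ?thesis using N0 by simp
      qed
      also have "\<dots> < \<epsilon>^2" using N eps N0 by (simp add: field_simps)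
      finally have lt: "infsum (\<lambda>x. (cmod (perm_rep G \<phi> g f x - f x))^2) X < \<epsilon>^2" .
      have "l2_norm X (\<lambda>x. perm_rep G \<phi> g f x - f x) < sqrt (\<epsilon>^2)"
        unfolding l2_norm_def by (rule real_sqrt_less_mono[OF lt])
      thus "l2_norm X (\<lambda>x. perm_rep G \<phi> g f x - f x) < \<epsilon>" using eps by simp
    qed
    ultimately show "\<exists>f. l2_vec X f \<and> l2_norm X f = 1 \<and>
        (\<forall>g\<in>Fs. l2_norm X (\<lambda>x. perm_rep G \<phi> g f x - f x) < \<epsilon>)" by blast
  qed
  have "\<exists>x\<in>X. \<forall>g\<in>carrier G. \<phi> g x = x"
    using PF[unfolded property_F_def, rule_format, OF amen] .
  then obtain x where x: "x \<in> X" and fx: "\<And>g. g \<in> carrier G \<Longrightarrow> \<phi> g x = x" by blast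
  fix g assume g: "g \<in> carrier G"
  have "enc (chr g * dec x) = enc (dec x)" using fx[OF g] x decX unfolding \<phi>_def \<psi>_def by simp
  hence "chr g * dec x = dec x" using encinj decX[OF x] Amul[OF Achi[OF g]] by (meson inj_onD)
  thus "chr g = 1" using Anz decX[OF x] by simp
qed


lemma powr_sq: fixes x s :: real shows "(x powr s)^2 = x powr (2 * s)"
proof -
  have "(x powr s)^2 = x powr s * x powr s" by (simp add: power2_eq_square)
  also have "\<dots> = x powr (s + s)" by (rule powr_add[symmetric])
  finally show ?thesis by (simp only: mult_2)
qed

lemma sq_powr: fixes x q :: real shows "x > 0 \<Longrightarrow> x^2 * x powr q = x powr (q + 2)"
proof -
  assume "x > 0"
  hence "x^2 = x powr 2" by (simp add: powr_realpow)
  thus ?thesis by (simp add: powr_add)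
qed

lemma mazur_le2:
  fixes a b p :: real
  assumes p: "0 < p" "p \<le> 2" and ab: "a \<ge> 0" "b \<ge> 0"
  shows "(a powr (p/2) - b powr (p/2))^2 \<le> \<bar>a - b\<bar> powr p"
proof -
  define r where "r = p/2"
  have r: "0 < r" "r \<le> 1" using p r_def by auto
  have key: "\<bar>x powr r - y powr r\<bar> \<le> \<bar>x - y\<bar> powr r" if "x \<ge> y" "y \<ge> 0" for x y :: real
  proof -
    have "x powr r = ((x - y) + y) powr r" by simp
    also have "\<dots> \<le> (x - y) powr r + y powr r" by (rule powr_subadd) (use r that in auto)
    finally have "x powr r - y powr r \<le> \<bar>x - y\<bar> powr r" using that by simp
    moreover have "y powr r \<le> x powr r" using that r by (intro powr_mono2) auto
    ultimately show ?thesis by simp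
  qed
  have k: "\<bar>a powr r - b powr r\<bar> \<le> \<bar>a - b\<bar> powr r"
  proof (cases "a \<ge> b")
    case True thus ?thesis using key ab by blast
  next
    case False
    hence "a \<le> b" by simp
    hence "\<bar>b powr r - a powr r\<bar> \<le> \<bar>b - a\<bar> powr r" using key[OF _ ab(1)] by blast
    thus ?thesis by (metis abs_minus_commute)
  qed
  have "(a powr r - b powr r)^2 = \<bar>a powr r - b powr r\<bar>^2" by simp
  also have "\<dots> \<le> (\<bar>a - b\<bar> powr r)^2" by (rule power_mono[OF k]) simp
  also have "(\<bar>a - b\<bar> powr r)^2 = \<bar>a - b\<bar> powr (2*r)" by (rule powr_sq)
  finally show ?thesis unfolding r_def by simp
qed

lemma tangent_powr:
  fixes a b r :: real
  assumes r: "r \<ge> 1" and ab: "a \<ge> b" "b \<ge> 0"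
  shows "a powr r - b powr r \<le> r * a powr (r - 1) * (a - b)"
proof (cases "b = 0")
  case True
  show ?thesis
  proof (cases "a = 0")
    case True thus ?thesis using \<open>b = 0\<close> by simp
  next
    case False
    hence a: "a > 0" using ab by simp
    have "a powr r = a * a powr (r - 1)" using a by (simp add: powr_mult_base)
    also have "\<dots> \<le> r * (a * a powr (r - 1))" using mult_right_mono[of 1 r "a * a powr (r - 1)"] r a by simp
    finally show ?thesis using True by (simp add: mult.commute mult.left_commute)
  qed
next
  case False
  hence b: "b > 0" using ab by simp
  hence a: "a > 0" using ab by simp
  have conv: "convex_on {0<..} (\<lambda>x::real. x powr r)" using powr_convex r by simp
  have "b powr r - a powr r \<ge> (r * a powr (r - 1)) * (b - a)"
  proof (rule convex_on_imp_above_tangent[OF conv])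
    show "connected {0::real<..}" by (simp add: convex_connected)
    show "a \<in> interior {0<..}" using a by (simp add: interior_open)
    show "b \<in> {0<..}" using b by simp
    show "((\<lambda>x. x powr r) has_field_derivative r * a powr (r - 1)) (at a within {0<..})"
      using has_real_derivative_powr[OF a] by (rule has_field_derivative_at_within)
  qed
  thus ?thesis by (simp add: algebra_simps)
qed

lemma mazur_gt2:
  fixes a b p \<eta> :: real
  assumes p: "p > 2" and ab: "a \<ge> 0" "b \<ge> 0" and eta: "\<eta> > 0"
  shows "(a powr (p/2) - b powr (p/2))^2 \<le> (p/2)^2 * (\<eta> powr (2 - p) * \<bar>a - b\<bar> powr p + \<eta>^2 * (a powr p + b powr p))"
proof -
  define r where "r = p/2"
  have r: "r \<ge> 1" using p r_def by simp
  have main: "(x powr r - y powr r)^2 \<le> r^2 * (\<eta> powr (2 - p) * \<bar>x - y\<bar> powr p + \<eta>^2 * x powr p)"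
    if xy: "x \<ge> y" "y \<ge> 0" for x y :: real
  proof -
    have x0: "x \<ge> 0" using xy by simp
    have t: "x powr r - y powr r \<le> r * x powr (r - 1) * (x - y)" by (rule tangent_powr[OF r xy])
    have nn: "0 \<le> x powr r - y powr r" using xy r by (simp add: powr_mono2)
    have "(x powr r - y powr r)^2 \<le> (r * x powr (r - 1) * (x - y))^2"
      by (rule power_mono[OF t nn])
    also have "\<dots> = r^2 * ((x - y)^2 * x powr (p - 2))"
    proof -
      have "(x powr (r - 1))^2 = x powr (p - 2)"
        unfolding powr_sq r_def by (simp add: algebra_simps)
      thus ?thesis by (simp add: power_mult_distrib)
    qed
    also have "(x - y)^2 * x powr (p - 2) \<le> \<eta> powr (2 - p) * \<bar>x - y\<bar> powr p + \<eta>^2 * x powr p"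
    proof (cases "x - y \<ge> \<eta> * x")
      case True
      define d where "d = x - y"
      have d0: "d \<ge> 0" using xy d_def by simp
      have "x \<le> d / \<eta>" using True eta d_def by (simp add: field_simps)
      hence "x powr (p - 2) \<le> (d / \<eta>) powr (p - 2)" using x0 p by (intro powr_mono2) auto
      also have "\<dots> = d powr (p - 2) / \<eta> powr (p - 2)"
        using eta d0 by (simp add: powr_divide)
      also have "\<eta> powr (2 - p) = inverse (\<eta> powr (p - 2))"
        using powr_minus[of \<eta> "p - 2"] by simp
      hence "d powr (p - 2) / \<eta> powr (p - 2) = d powr (p - 2) * \<eta> powr (2 - p)"
        by (simp add: divide_inverse)
      finally have "d^2 * x powr (p - 2) \<le> d^2 * (d powr (p - 2) * \<eta> powr (2 - p))"
        by (rule mult_left_mono) simp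
      also have "d^2 * (d powr (p - 2) * \<eta> powr (2 - p)) = \<eta> powr (2 - p) * d powr p"
      proof (cases "d = 0")
        case True thus ?thesis by simp
      next
        case False
        hence "d^2 * d powr (p - 2) = d powr p" using d0 sq_powr[of d "p - 2"] by simp
        thus ?thesis by (simp add: algebra_simps)
      qed
      finally show ?thesis unfolding d_def using d0 d_def
        by (smt (verit) abs_of_nonneg mult_nonneg_nonneg powr_ge_zero zero_le_power2)
    next
      case False
      hence lt: "x - y < \<eta> * x" by simp
      have "(x - y)^2 \<le> (\<eta> * x)^2" using lt xy by (intro power_mono) auto
      hence "(x - y)^2 * x powr (p - 2) \<le> (\<eta> * x)^2 * x powr (p - 2)"
        by (rule mult_right_mono) simp
      also have "(\<eta> * x)^2 * x powr (p - 2) = \<eta>^2 * x powr p"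
      proof (cases "x = 0")
        case True thus ?thesis using p by simp
      next
        case False
        hence "x^2 * x powr (p - 2) = x powr p" using x0 sq_powr[of x "p - 2"] by simp
        thus ?thesis by (simp add: power_mult_distrib algebra_simps)
      qed
      finally show ?thesis
        by (smt (verit) mult_nonneg_nonneg powr_ge_zero eta)
    qed
    hence "r^2 * ((x - y)^2 * x powr (p - 2)) \<le> r^2 * (\<eta> powr (2 - p) * \<bar>x - y\<bar> powr p + \<eta>^2 * x powr p)"
      by (rule mult_left_mono) simp
    finally show ?thesis .
  qed
  show ?thesis
  proof (cases "a \<ge> b")
    case True
    have "(a powr r - b powr r)^2 \<le> r^2 * (\<eta> powr (2 - p) * \<bar>a - b\<bar> powr p + \<eta>^2 * a powr p)"
      by (rule main[OF True ab(2)])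
    also have "\<dots> \<le> r^2 * (\<eta> powr (2 - p) * \<bar>a - b\<bar> powr p + \<eta>^2 * (a powr p + b powr p))"
      by (intro mult_left_mono add_left_mono) auto
    finally show ?thesis unfolding r_def .
  next
    case False
    have "(b powr r - a powr r)^2 \<le> r^2 * (\<eta> powr (2 - p) * \<bar>b - a\<bar> powr p + \<eta>^2 * b powr p)"
      using False ab by (intro main) auto
    also have "\<dots> = r^2 * (\<eta> powr (2 - p) * \<bar>a - b\<bar> powr p + \<eta>^2 * b powr p)"
      by (simp add: abs_minus_commute)
    also have "\<dots> \<le> r^2 * (\<eta> powr (2 - p) * \<bar>a - b\<bar> powr p + \<eta>^2 * (a powr p + b powr p))"
      by (intro mult_left_mono add_left_mono) auto
    finally show ?thesis unfolding r_def by (simp add: power2_commute)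
  qed
qed


lemma sq_diff_le: fixes x y :: real shows "(x - y)^2 \<le> 2 * (x^2 + y^2)"
proof -
  have "2 * (x^2 + y^2) - (x - y)^2 = (x + y)^2" by (simp add: power2_eq_square algebra_simps)
  thus ?thesis by (metis diff_ge_0_iff_ge zero_le_power2)
qed

context iso begin

lemma est:
  assumes u: "u \<in> lp_space p" and u1: "PP p u = 1"
  defines "E \<equiv> (\<lambda>x. (cmod (u (sig x)) powr (p/2) - cmod (u x) powr (p/2))^2)"
  defines "D \<equiv> PP p (\<lambda>k. T u k - u k)"
  shows "E summable_on UNIV"
    and "p \<le> 2 \<Longrightarrow> infsum E UNIV \<le> D"
    and "p > 2 \<Longrightarrow> \<eta> > 0 \<Longrightarrow> infsum E UNIV \<le> (p/2)^2 * (\<eta> powr (2 - p) * D + \<eta>^2 * 2)"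
proof -
  define a where "a x = cmod (u (sig x))" for x
  define b where "b x = cmod (u x)" for x
  have bij: "bij_betw sig UNIV UNIV" using sig_bij by (simp add: bij_def bij_betw_def)
  have sb: "(\<lambda>x. b x powr p) summable_on UNIV" using u unfolding b_def lp_space_def by simp
  have ib: "infsum (\<lambda>x. b x powr p) UNIV = 1" using u1 unfolding b_def PP_def by simp
  have sa: "(\<lambda>x. a x powr p) summable_on UNIV"
    unfolding a_def using summable_on_reindex_bij_betw[OF bij, of "\<lambda>x. cmod (u x) powr p"] sb b_def by simp
  have ia: "infsum (\<lambda>x. a x powr p) UNIV = 1"
    unfolding a_def using infsum_reindex_bij_betw[OF bij, of "\<lambda>x. cmod (u x) powr p"] ib b_def by simp
  define w where "w = (\<lambda>k. T u k - u k)"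
  have win: "w \<in> lp_space p" unfolding w_def by (rule lp_diff[OF T_in[OF u] u p(1)])
  have sw: "(\<lambda>k. cmod (w k) powr p) summable_on UNIV" using win by (simp add: lp_space_def)
  have sw': "(\<lambda>x. cmod (w (sig x)) powr p) summable_on UNIV"
    using summable_on_reindex_bij_betw[OF bij, of "\<lambda>k. cmod (w k) powr p"] sw by simp
  have iw': "infsum (\<lambda>x. cmod (w (sig x)) powr p) UNIV = D"
    using infsum_reindex_bij_betw[OF bij, of "\<lambda>k. cmod (w k) powr p"] unfolding D_def PP_def w_def by simp
  have ptw: "\<bar>a x - b x\<bar> powr p \<le> cmod (w (sig x)) powr p" for x
  proof -
    have "w (sig x) = coef x * u x - u (sig x)" unfolding w_def using coord[OF u] by simp
    moreover have "\<bar>a x - b x\<bar> = \<bar>cmod (coef x * u x) - cmod (u (sig x))\<bar>"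
      unfolding a_def b_def by (simp add: norm_mult coef_norm abs_minus_commute)
    ultimately have "\<bar>a x - b x\<bar> \<le> cmod (w (sig x))" using norm_triangle_ineq3 by metis
    thus ?thesis using p(1) by (intro powr_mono2) auto
  qed
  have sd: "(\<lambda>x. \<bar>a x - b x\<bar> powr p) summable_on UNIV"
    by (rule summable_on_comparison_test[OF sw']) (use ptw in auto)
  have id: "infsum (\<lambda>x. \<bar>a x - b x\<bar> powr p) UNIV \<le> D"
    using infsum_mono[OF sd sw' ptw] iw' by simp
  have a0: "\<And>x. a x \<ge> 0" and b0: "\<And>x. b x \<ge> 0" by (simp_all add: a_def b_def)
  have E_eq: "E = (\<lambda>x. (a x powr (p/2) - b x powr (p/2))^2)" unfolding E_def a_def b_def by simp
  have E0: "\<And>x. E x \<ge> 0" unfolding E_def by simp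
  have Ebig: "E x \<le> 2 * (a x powr p + b x powr p)" for x
  proof -
    have "E x \<le> 2 * ((a x powr (p/2))^2 + (b x powr (p/2))^2)"
      unfolding E_eq by (rule sq_diff_le)
    also have "(a x powr (p/2))^2 = a x powr p" using powr_sq[of "a x" "p/2"] by simp
    also have "(b x powr (p/2))^2 = b x powr p" using powr_sq[of "b x" "p/2"] by simp
    finally show ?thesis .
  qed
  show sE: "E summable_on UNIV"
    by (rule summable_on_comparison_test[OF summable_on_cmult_right[OF summable_on_add[OF sa sb], of 2]])
       (use Ebig E0 in auto)
  show "p \<le> 2 \<Longrightarrow> infsum E UNIV \<le> D"
  proof -
    assume p2: "p \<le> 2"
    have "\<And>x. E x \<le> \<bar>a x - b x\<bar> powr p" unfolding E_eq using mazur_le2[OF p(1) p2 a0 b0] .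
    hence "infsum E UNIV \<le> infsum (\<lambda>x. \<bar>a x - b x\<bar> powr p) UNIV" by (rule infsum_mono[OF sE sd])
    thus ?thesis using id by simp
  qed
  show "p > 2 \<Longrightarrow> \<eta> > 0 \<Longrightarrow> infsum E UNIV \<le> (p/2)^2 * (\<eta> powr (2 - p) * D + \<eta>^2 * 2)"
  proof -
    assume p2: "p > 2" and eta: "\<eta> > 0"
    define R where "R x = (p/2)^2 * (\<eta> powr (2 - p) * \<bar>a x - b x\<bar> powr p + \<eta>^2 * (a x powr p + b x powr p))" for x
    have ER: "\<And>x. E x \<le> R x" unfolding E_eq R_def using mazur_gt2[OF p2 a0 b0 eta] .
    have s1: "(\<lambda>x. \<eta> powr (2 - p) * \<bar>a x - b x\<bar> powr p) summable_on UNIV" by (rule summable_on_cmult_right[OF sd])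
    have s2: "(\<lambda>x. a x powr p + b x powr p) summable_on UNIV" by (rule summable_on_add[OF sa sb])
    have s3: "(\<lambda>x. \<eta>^2 * (a x powr p + b x powr p)) summable_on UNIV" by (rule summable_on_cmult_right[OF s2])
    have s4: "(\<lambda>x. \<eta> powr (2 - p) * \<bar>a x - b x\<bar> powr p + \<eta>^2 * (a x powr p + b x powr p)) summable_on UNIV"
      by (rule summable_on_add[OF s1 s3])
    have sR: "R summable_on UNIV" unfolding R_def by (rule summable_on_cmult_right[OF s4])
    have "infsum E UNIV \<le> infsum R UNIV" by (rule infsum_mono[OF sE sR ER])
    also have "infsum R UNIV = (p/2)^2 * (\<eta> powr (2 - p) * infsum (\<lambda>x. \<bar>a x - b x\<bar> powr p) UNIV + \<eta>^2 * 2)"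
      unfolding R_def
      by (simp only: infsum_cmult_right[OF s4] infsum_add[OF s1 s3] infsum_cmult_right[OF sd]
          infsum_cmult_right[OF s2] infsum_add[OF sa sb] ia ib) simp
    also have "\<dots> \<le> (p/2)^2 * (\<eta> powr (2 - p) * D + \<eta>^2 * 2)"
      using id by (intro mult_left_mono add_right_mono) auto
    finally show ?thesis .
  qed
qed

end


theorem proposition1p15:
  fixes G :: "('g, 'b) monoid_scheme" and p :: real
  assumes "group G" and "countable (carrier G)" and "property_F G"
    and "1 < p" and "p \<noteq> 2"
  shows "property_T_lp G p"
proof -
  note G = assms(1) and cG = assms(2) and PF = assms(3)
  have p0: "p > 0" and p2: "p \<noteq> 2" using assms by auto
  have mc: "\<And>g h. g \<in> carrier G \<Longrightarrow> h \<in> carrier G \<Longrightarrow> g \<otimes>\<^bsub>G\<^esub> h \<in> carrier G"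
    using G by (simp add: group.is_monoid monoid.m_closed)
  have ic: "\<And>g. g \<in> carrier G \<Longrightarrow> inv\<^bsub>G\<^esub> g \<in> carrier G" using G by (simp add: group.inv_closed)
  show ?thesis unfolding property_T_lp_def
  proof (intro allI impI notI)
    fix \<pi> assume orth: "orth_rep G p \<pi>"
    assume "\<exists>f :: nat \<Rightarrow> nat \<Rightarrow> complex.
            (\<forall>n. f n \<in> lp_prime G p \<pi> \<and> lp_norm p (f n) = 1) \<and>
            (\<forall>g\<in>carrier G. (\<lambda>n. lp_norm p (\<lambda>k. \<pi> g (f n) k - f n k)) \<longlonglongrightarrow> 0)"
    then obtain f :: "nat \<Rightarrow> nat \<Rightarrow> complex" where
      fprime: "\<And>n. f n \<in> lp_prime G p \<pi>" and fnorm: "\<And>n. lp_norm p (f n) = 1"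
      and conv: "\<And>g. g \<in> carrier G \<Longrightarrow> (\<lambda>n. lp_norm p (\<lambda>k. \<pi> g (f n) k - f n k)) \<longlonglongrightarrow> 0"
      by blast
    have isoG: "\<And>g. g \<in> carrier G \<Longrightarrow> iso p (\<pi> g)"
      using orth p0 p2 unfolding orth_rep_def by (simp add: iso_def)
    have hom\<pi>: "\<And>g h u. g \<in> carrier G \<Longrightarrow> h \<in> carrier G \<Longrightarrow> u \<in> lp_space p \<Longrightarrow> \<pi> (g \<otimes>\<^bsub>G\<^esub> h) u = \<pi> g (\<pi> h u)"
      using orth unfolding orth_rep_def by blast
    define \<sigma> where "\<sigma> g = iso.sig (\<pi> g)" for g
    define co where "co g = iso.coef (\<pi> g)" for g
    have coordG: "\<And>g u k. g \<in> carrier G \<Longrightarrow> u \<in> lp_space p \<Longrightarrow> \<pi> g u (\<sigma> g k) = co g k * u k"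
      unfolding \<sigma>_def co_def using isoG iso.coord by blast
    have cnormG: "\<And>g k. g \<in> carrier G \<Longrightarrow> cmod (co g k) = 1"
      unfolding co_def using isoG iso.coef_norm by blast
    have sbijG: "\<And>g. g \<in> carrier G \<Longrightarrow> bij (\<sigma> g)"
      unfolding \<sigma>_def using isoG iso.sig_bij by blast
    have atomG: "\<And>g k. g \<in> carrier G \<Longrightarrow> \<pi> g (delta k) = (\<lambda>n. co g k * delta (\<sigma> g k) n)"
      unfolding \<sigma>_def co_def using isoG iso.atom' by blast
    have scaleG: "\<And>g u c. g \<in> carrier G \<Longrightarrow> u \<in> lp_space p \<Longrightarrow> \<pi> g (\<lambda>n. c * u n) = (\<lambda>n. c * \<pi> g u n)"
      using isoG iso.T_scale by blast
    have compG: "\<sigma> (g \<otimes>\<^bsub>G\<^esub> h) k = \<sigma> g (\<sigma> h k) \<and> co (g \<otimes>\<^bsub>G\<^esub> h) k = co h k * co g (\<sigma> h k)"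
      if g: "g \<in> carrier G" and h: "h \<in> carrier G" for g h k
    proof -
      have "\<pi> (g \<otimes>\<^bsub>G\<^esub> h) (delta k) = \<pi> g (\<pi> h (delta k))" by (rule hom\<pi>[OF g h lp_delta])
      also have "\<dots> = \<pi> g (\<lambda>n. co h k * delta (\<sigma> h k) n)" using atomG[OF h] by simp
      also have "\<dots> = (\<lambda>n. co h k * \<pi> g (delta (\<sigma> h k)) n)" by (rule scaleG[OF g lp_delta])
      also have "\<dots> = (\<lambda>n. co h k * (co g (\<sigma> h k) * delta (\<sigma> g (\<sigma> h k)) n))" using atomG[OF g] by simp
      finally have e: "(\<lambda>n. co (g \<otimes>\<^bsub>G\<^esub> h) k * delta (\<sigma> (g \<otimes>\<^bsub>G\<^esub> h) k) n)
          = (\<lambda>n. co h k * (co g (\<sigma> h k) * delta (\<sigma> g (\<sigma> h k)) n))"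
        using atomG[OF mc[OF g h]] by simp
      have nz1: "co (g \<otimes>\<^bsub>G\<^esub> h) k \<noteq> 0" using cnormG[OF mc[OF g h], of k] by (metis norm_zero zero_neq_one)
      have s: "\<sigma> (g \<otimes>\<^bsub>G\<^esub> h) k = \<sigma> g (\<sigma> h k)"
      proof (rule ccontr)
        assume ne: "\<sigma> (g \<otimes>\<^bsub>G\<^esub> h) k \<noteq> \<sigma> g (\<sigma> h k)"
        have "co (g \<otimes>\<^bsub>G\<^esub> h) k * delta (\<sigma> (g \<otimes>\<^bsub>G\<^esub> h) k) (\<sigma> (g \<otimes>\<^bsub>G\<^esub> h) k)
             = co h k * (co g (\<sigma> h k) * delta (\<sigma> g (\<sigma> h k)) (\<sigma> (g \<otimes>\<^bsub>G\<^esub> h) k))"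
          using fun_cong[OF e] by blast
        thus False using nz1 ne by (simp add: delta_def)
      qed
      have "co (g \<otimes>\<^bsub>G\<^esub> h) k * delta (\<sigma> (g \<otimes>\<^bsub>G\<^esub> h) k) (\<sigma> (g \<otimes>\<^bsub>G\<^esub> h) k)
             = co h k * (co g (\<sigma> h k) * delta (\<sigma> g (\<sigma> h k)) (\<sigma> (g \<otimes>\<^bsub>G\<^esub> h) k))"
        using fun_cong[OF e] by blast
      hence "co (g \<otimes>\<^bsub>G\<^esub> h) k = co h k * co g (\<sigma> h k)" using s by (simp add: delta_def)
      thus ?thesis using s by simp
    qed
    define Z where "Z = {k. \<forall>g\<in>carrier G. \<sigma> g k = k}"
    define Y where "Y = - Z"
    have charZ: "\<And>k g. k \<in> Z \<Longrightarrow> g \<in> carrier G \<Longrightarrow> co g k = 1"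
    proof -
      fix k g assume k: "k \<in> Z" and g: "g \<in> carrier G"
      show "co g k = 1"
      proof (rule no_character[OF G cG PF, where chr = "\<lambda>g. co g k"])
        show "\<And>g h. g \<in> carrier G \<Longrightarrow> h \<in> carrier G \<Longrightarrow> co (g \<otimes>\<^bsub>G\<^esub> h) k = co g k * co h k"
          using compG k unfolding Z_def by (simp add: mult.commute)
        show "\<And>g. g \<in> carrier G \<Longrightarrow> co g k \<noteq> 0" using cnormG by (metis norm_zero zero_neq_one)
      qed (rule g)
    qed
    have fixZ: "\<And>k g u. k \<in> Z \<Longrightarrow> g \<in> carrier G \<Longrightarrow> u \<in> lp_space p \<Longrightarrow> \<pi> g u k = u k"
      using coordG charZ unfolding Z_def by (metis (mono_tags, lifting) mem_Collect_eq mult_1)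
    have pair_delta: "\<And>u k. pairing u (delta k) = u k"
      unfolding pairing_def delta_def by (subst infsum_single_point) auto
    have flp: "\<And>n. f n \<in> lp_space p" using fprime unfolding lp_prime_def by blast
    have fZ: "\<And>n k. k \<in> Z \<Longrightarrow> f n k = 0"
    proof -
      fix n k assume k: "k \<in> Z"
      have "delta k \<in> dual_invariant G p \<pi>"
        unfolding dual_invariant_def using lp_delta pair_delta fixZ[OF k] ic by auto
      hence "pairing (f n) (delta k) = 0" using fprime[of n] unfolding lp_prime_def by blast
      thus "f n k = 0" using pair_delta by simp
    qed
    have \<sigma>Y: "\<And>g. g \<in> carrier G \<Longrightarrow> bij_betw (\<sigma> g) Y Y"
    proof -
      fix g assume g: "g \<in> carrier G"
      have b: "bij (\<sigma> g)" by (rule sbijG[OF g])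
      have inj: "inj (\<sigma> g)" using b by (simp add: bij_def)
      have zz: "\<And>k. k \<in> Z \<Longrightarrow> \<sigma> g k = k" using g unfolding Z_def by blast
      show "bij_betw (\<sigma> g) Y Y" unfolding bij_betw_def
      proof
        show "inj_on (\<sigma> g) Y" using inj_on_subset[OF inj subset_UNIV] .
        show "\<sigma> g ` Y = Y"
        proof
          show "\<sigma> g ` Y \<subseteq> Y"
          proof
            fix j assume "j \<in> \<sigma> g ` Y"
            then obtain k where k: "k \<in> Y" "j = \<sigma> g k" by blast
            show "j \<in> Y"
            proof (rule ccontr)
              assume "j \<notin> Y"
              hence "j \<in> Z" unfolding Y_def by simp
              hence "\<sigma> g j = j" by (rule zz)
              hence "\<sigma> g j = \<sigma> g k" using k by simp
              hence "j = k" using inj by (simp add: inj_eq)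
              thus False using \<open>j \<in> Z\<close> k Y_def by simp
            qed
          qed
          show "Y \<subseteq> \<sigma> g ` Y"
          proof
            fix j assume j: "j \<in> Y"
            obtain k where k: "j = \<sigma> g k" using b by (metis bij_pointE)
            have "k \<in> Y"
            proof (rule ccontr)
              assume "k \<notin> Y"
              hence "k \<in> Z" unfolding Y_def by simp
              hence "j = k" using zz k by simp
              thus False using \<open>k \<notin> Y\<close> j by simp
            qed
            thus "j \<in> \<sigma> g ` Y" using k by blast
          qed
        qed
      qed
    qed
    define \<phi> where "\<phi> = (\<lambda>g. restrict (\<sigma> g) Y)"
    have act: "group_action G Y \<phi>" unfolding \<phi>_def
    proof (rule group_action_restrict[OF G \<sigma>Y])
      fix g1 h1 x assume a: "g1 \<in> carrier G" "h1 \<in> carrier G" "x \<in> Y"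
      show "\<sigma> (g1 \<otimes>\<^bsub>G\<^esub> h1) x = \<sigma> g1 (\<sigma> h1 x)" using compG[OF a(1,2), of x] by blast
    qed
    define h where "h n x = complex_of_real (cmod (f n x) powr (p/2))" for n x
    define S where "S n g = infsum (\<lambda>x. (cmod (perm_rep G \<phi> g (h n) x - h n x))^2) Y" for n g
    have PPf: "\<And>n. PP p (f n) = 1" using fnorm lp_norm_one_iff[OF p0] by simp
    have Ssmall: "\<And>g e. g \<in> carrier G \<Longrightarrow> e > 0 \<Longrightarrow> eventually (\<lambda>n. S n g < e) sequentially"
    proof -
      fix g and e :: real assume g: "g \<in> carrier G" and e: "e > 0"
      define gi where "gi = inv\<^bsub>G\<^esub> g"
      have gi: "gi \<in> carrier G" unfolding gi_def by (rule ic[OF g])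
      interpret I: iso p "\<pi> gi" by (rule isoG[OF gi])
      have sg: "I.sig = \<sigma> gi" unfolding \<sigma>_def by simp
      define E where "E n x = (cmod (f n (\<sigma> gi x)) powr (p/2) - cmod (f n x) powr (p/2))^2" for n x
      define D where "D n = PP p (\<lambda>k. \<pi> gi (f n) k - f n k)" for n
      have Esum: "\<And>n. E n summable_on UNIV" unfolding E_def using I.est(1)[OF flp PPf] sg by simp
      have E0: "\<And>n x. E n x \<ge> 0" unfolding E_def by simp
      have Sle: "S n g \<le> infsum (E n) UNIV" for n
      proof -
        have "S n g = infsum (E n) Y"
          unfolding S_def
        proof (rule infsum_cong)
          fix x assume x: "x \<in> Y"
          have "perm_rep G \<phi> g (h n) x = h n (\<sigma> gi x)"
            unfolding perm_rep_def \<phi>_def gi_def using x by simp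
          hence "perm_rep G \<phi> g (h n) x - h n x
              = complex_of_real (cmod (f n (\<sigma> gi x)) powr (p/2) - cmod (f n x) powr (p/2))"
            unfolding h_def by simp
          thus "(cmod (perm_rep G \<phi> g (h n) x - h n x))^2 = E n x"
            unfolding E_def by (simp only: norm_of_real power2_abs)
        qed
        also have "\<dots> \<le> infsum (E n) UNIV"
          by (rule infsum_mono_neutral[OF summable_on_subset[OF Esum] Esum]) (use E0 in auto)
        finally show ?thesis .
      qed
      have Dlim: "D \<longlonglongrightarrow> 0"
      proof -
        have "(\<lambda>n. lp_norm p (\<lambda>k. \<pi> gi (f n) k - f n k) powr p) \<longlonglongrightarrow> 0"
          by (rule tendsto_zero_powrI[OF conv[OF gi]]) (use p0 in \<open>auto simp: lp_norm_def\<close>)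
        moreover have "lp_norm p (\<lambda>k. \<pi> gi (f n) k - f n k) powr p = D n" for n
        proof -
          have "lp_norm p (\<lambda>k. \<pi> gi (f n) k - f n k) = D n powr (1/p)"
            unfolding lp_norm_def D_def PP_def by simp
          thus ?thesis using p0 PP_nonneg[of p] unfolding D_def by (simp add: powr_powr)
        qed
        ultimately show ?thesis by simp
      qed
      show "eventually (\<lambda>n. S n g < e) sequentially"
      proof (cases "p \<le> 2")
        case True
        have "eventually (\<lambda>n. D n < e) sequentially" using Dlim e by (rule order_tendstoD)
        thus ?thesis
        proof (rule eventually_mono)
          fix n assume "D n < e"
          moreover have "infsum (E n) UNIV \<le> D n"
            unfolding E_def D_def using I.est(2)[OF flp PPf True] sg by simp
          ultimately show "S n g < e" using Sle[of n] by simp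
        qed
      next
        case False
        hence pg: "p > 2" by simp
        define r where "r = p/2"
        have r0: "r > 0" using p0 r_def by simp
        define \<eta> where "\<eta> = sqrt (e / (4 * r^2))"
        have eta: "\<eta> > 0" unfolding \<eta>_def using e r0 by simp
        have eta2: "r^2 * (\<eta>^2 * 2) = e / 2" unfolding \<eta>_def using e r0 by simp
        have "(\<lambda>n. r^2 * \<eta> powr (2 - p) * D n) \<longlonglongrightarrow> r^2 * \<eta> powr (2 - p) * 0"
          by (rule tendsto_mult_left[OF Dlim])
        hence "eventually (\<lambda>n. r^2 * \<eta> powr (2 - p) * D n < e / 2) sequentially"
          using e by (intro order_tendstoD) auto
        thus ?thesis
        proof (rule eventually_mono)
          fix n assume lt: "r^2 * \<eta> powr (2 - p) * D n < e / 2"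
          have "infsum (E n) UNIV \<le> r^2 * (\<eta> powr (2 - p) * D n + \<eta>^2 * 2)"
            unfolding E_def D_def r_def using I.est(3)[OF flp PPf pg eta] sg by simp
          also have "\<dots> = r^2 * \<eta> powr (2 - p) * D n + r^2 * (\<eta>^2 * 2)" by (simp add: algebra_simps)
          finally show "S n g < e" using Sle[of n] lt eta2 by simp
        qed
      qed
    qed
    have amen: "amenable_action G Y \<phi>"
      unfolding amenable_action_def
    proof (intro conjI act allI impI)
      fix Fs :: "'g set" and \<epsilon> :: real
      assume "finite Fs \<and> Fs \<subseteq> carrier G \<and> 0 < \<epsilon>"
      hence fFs: "finite Fs" and Fs: "Fs \<subseteq> carrier G" and eps: "\<epsilon> > 0" by auto
      have "eventually (\<lambda>n. \<forall>g\<in>Fs. S n g < \<epsilon>^2) sequentially"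
      proof (rule eventually_ball_finite[OF fFs], rule ballI)
        fix g assume "g \<in> Fs"
        thus "eventually (\<lambda>n. S n g < \<epsilon>^2) sequentially" using Fs eps Ssmall by auto
      qed
      then obtain N where "\<And>n. n \<ge> N \<Longrightarrow> \<forall>g\<in>Fs. S n g < \<epsilon>^2"
        unfolding eventually_sequentially by blast
      hence "\<forall>g\<in>Fs. S N g < \<epsilon>^2" by blast
      then obtain n where n: "\<And>g. g \<in> Fs \<Longrightarrow> S n g < \<epsilon>^2" by blast
      have hsq: "\<And>x. (cmod (h n x))^2 = cmod (f n x) powr p"
      proof -
        fix x show "(cmod (h n x))^2 = cmod (f n x) powr p"
          unfolding h_def using powr_sq[of "cmod (f n x)" "p/2"] by simp
      qed
      have hY: "\<And>x. x \<notin> Y \<Longrightarrow> cmod (f n x) powr p = 0" using fZ unfolding Y_def by simp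
      have sum1: "(\<lambda>x. cmod (f n x) powr p) summable_on UNIV" using flp[of n] by (simp add: lp_space_def)
      have PP1: "PP p (f n) = 1" using fnorm[of n] lp_norm_one_iff[OF p0] by simp
      have "l2_vec Y (h n)" unfolding l2_vec_def hsq
        by (rule summable_on_subset[OF sum1]) simp
      moreover have "l2_norm Y (h n) = 1"
      proof -
        have "infsum (\<lambda>x. (cmod (h n x))^2) Y = infsum (\<lambda>x. cmod (f n x) powr p) UNIV"
          unfolding hsq by (rule infsum_cong_neutral) (use hY in auto)
        thus ?thesis using PP1 unfolding l2_norm_def PP_def by simp
      qed
      moreover have "\<forall>g\<in>Fs. l2_norm Y (\<lambda>x. perm_rep G \<phi> g (h n) x - h n x) < \<epsilon>"
      proof
        fix g assume "g \<in> Fs"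
        hence "S n g < \<epsilon>^2" by (rule n)
        hence "sqrt (S n g) < sqrt (\<epsilon>^2)" by (rule real_sqrt_less_mono)
        thus "l2_norm Y (\<lambda>x. perm_rep G \<phi> g (h n) x - h n x) < \<epsilon>"
          using eps unfolding l2_norm_def S_def by simp
      qed
      ultimately show "\<exists>f. l2_vec Y f \<and> l2_norm Y f = 1 \<and>
          (\<forall>g\<in>Fs. l2_norm Y (\<lambda>x. perm_rep G \<phi> g f x - f x) < \<epsilon>)" by blast
    qed
    have "\<exists>x\<in>Y. \<forall>g\<in>carrier G. \<phi> g x = x"
      using PF[unfolded property_F_def, rule_format, OF amen] .
    then obtain x where x: "x \<in> Y" and fx: "\<And>g. g \<in> carrier G \<Longrightarrow> \<phi> g x = x" by blast
    have "x \<in> Z" unfolding Z_def using fx x unfolding \<phi>_def by simp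
    thus False using x Y_def by simp
  qed
qed


end
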